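(* Assume $\kappa=\kappa^{<\kappa}$ and let $p$ be a $P_\kappa$-point of $S_\kappa$. There is a family $\{A^f: f\in 2^\kappa\}$ of clopen subsets of $S_\kappa\setminus\{p\}$ such that for all $f,g\in 2^\kappa$: (1) $A^f\neq\emptyset$ whenever $f$ has non-empty support; (2) $A^f$ is non-compact whenever $f$ has unbounded support in $\kappa$; (3) $A^{1-f}\cap A^f=\emptyset$; (4) if $f\le g$ pointwise then $A^f\subseteq A^g$; (5) if $f$ and $g$ agree on a final segment $[\delta,\kappa)$ for some $\delta<\kappa$, then there is a clopen neighbourhood $U$ of $p$ in $S_\kappa$ with $A^f\cap U=A^g\cap U$.
   Context: A space is zero-dimensional if it has a base of clopen sets. For a zero-dimensional space $X$ and an open $U\subseteq X$, the ($X$-)type $\tau(U)$ is the least cardinal $\tau$ such that $U$ is a union of $\tau$ many clopen subsets of $X$. A zero-dimensional space is an $F_\kappa$-space if every open subset of type less than $\kappa$ is $C^*$-embedded (every bounded continuous real-valued function on it extends continuously to the whole space). A space is a $G_\kappa$-space if every non-empty intersection of fewer than $\kappa$ open sets has non-empty interior. A $\kappa$-Parovičenko space is a compact Hausdorff zero-dimensional $F_\kappa$- and $G_\kappa$-space without isolated points (no weight restriction is imposed). If $\kappa=\kappa^{<\kappa}$ there is, up to homeomorphism, a unique $\kappa$-Parovičenko space of weight $\kappa$; it is denoted $S_\kappa$. A point $p$ of a space $Y$ is a $P_\kappa$-point of $Y$ if the intersection of fewer than $\kappa$ neighbourhoods of $p$ in $Y$ contains an open neighbourhood of $p$ in $Y$.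 For $f:\kappa\to\{0,1\}$, its support is $f^{-1}(\{1\})$, and $1-f$ denotes the pointwise complement. *)

theory Defs
  imports "HOL-Analysis.Analysis" "HOL-Library.FuncSet"
begin

definition card_lt :: "'a set \<Rightarrow> 'b set \<Rightarrow> bool" where
  "card_lt A B \<longleftrightarrow> (card_of A, card_of B) \<in> ordLess"

definition card_le :: "'a set \<Rightarrow> 'b set \<Rightarrow> bool" where
  "card_le A B \<longleftrightarrow> (card_of A, card_of B) \<in> ordLeq"

text \<open>The cardinal kappa is represented by a type 'k carrying a cardinal order r
  (an initial ordinal on UNIV); its elements are the ordinals below kappa.
  kappa^{<kappa} is the cardinality of the set of all functions from a proper
  initial segment [0,alpha) of kappa into kappa (tagged by alpha).\<close>

definition kappa_lt_kappa_funs :: "'k rel \<Rightarrow> ('k \<times> ('k \<Rightarrow> 'k)) set" where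
  "kappa_lt_kappa_funs r = {(\<alpha>, g). g \<in> underS r \<alpha> \<rightarrow>\<^sub>E (UNIV :: 'k set)}"

definition kappa_eq_kappa_lt_kappa :: "'k rel \<Rightarrow> bool" where
  "kappa_eq_kappa_lt_kappa r \<longleftrightarrow>
     (card_of (kappa_lt_kappa_funs r), card_of (UNIV :: 'k set)) \<in> ordIso"

definition clopenin :: "'a topology \<Rightarrow> 'a set \<Rightarrow> bool" where
  "clopenin X U \<longleftrightarrow> openin X U \<and> closedin X U"

definition is_base :: "'a topology \<Rightarrow> 'a set set \<Rightarrow> bool" where
  "is_base X B \<longleftrightarrow> (\<forall>V\<in>B. openin X V) \<and>
     (\<forall>U. openin X U \<longrightarrow> (\<exists>\<F>\<subseteq>B. \<Union>\<F> = U))"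

definition zero_dimensional :: "'a topology \<Rightarrow> bool" where
  "zero_dimensional X \<longleftrightarrow> (\<exists>B. is_base X B \<and> (\<forall>V\<in>B. clopenin X V))"

definition weight_eq :: "'a topology \<Rightarrow> 'k set \<Rightarrow> bool" where
  "weight_eq X K \<longleftrightarrow> (\<exists>B. is_base X B \<and> card_le B K) \<and> (\<forall>B. is_base X B \<longrightarrow> card_le K B)"

definition type_less :: "'a topology \<Rightarrow> 'k set \<Rightarrow> 'a set \<Rightarrow> bool" where
  "type_less X K U \<longleftrightarrow> (\<exists>\<F>. (\<forall>V\<in>\<F>. clopenin X V) \<and> \<Union>\<F> = U \<and> card_lt \<F> K)"

definition C_star_embedded :: "'a topology \<Rightarrow> 'a set \<Rightarrow> bool" where
  "C_star_embedded X U \<longleftrightarrow>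
     (\<forall>f. continuous_map (subtopology X U) euclideanreal f \<and> bounded (f ` U) \<longrightarrow>
        (\<exists>g. continuous_map X euclideanreal g \<and> (\<forall>x\<in>U. g x = f x)))"

definition F_kappa_space :: "'k set \<Rightarrow> 'a topology \<Rightarrow> bool" where
  "F_kappa_space K X \<longleftrightarrow> zero_dimensional X \<and>
     (\<forall>U. openin X U \<and> type_less X K U \<longrightarrow> C_star_embedded X U)"

definition G_kappa_space :: "'k set \<Rightarrow> 'a topology \<Rightarrow> bool" where
  "G_kappa_space K X \<longleftrightarrow>
     (\<forall>\<U>. (\<forall>V\<in>\<U>. openin X V) \<and> card_lt \<U> K \<and> topspace X \<inter> \<Inter>\<U> \<noteq> {} \<longrightarrow>
        X interior_of (topspace X \<inter> \<Inter>\<U>) \<noteq> {})"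

definition kappa_Parovicenko :: "'k set \<Rightarrow> 'a topology \<Rightarrow> bool" where
  "kappa_Parovicenko K X \<longleftrightarrow> compact_space X \<and> Hausdorff_space X \<and> zero_dimensional X \<and>
     F_kappa_space K X \<and> G_kappa_space K X \<and> (\<forall>x\<in>topspace X. \<not> openin X {x})"

definition neighbourhood :: "'a topology \<Rightarrow> 'a \<Rightarrow> 'a set \<Rightarrow> bool" where
  "neighbourhood Y p N \<longleftrightarrow> (\<exists>V. openin Y V \<and> p \<in> V \<and> V \<subseteq> N)"

definition P_kappa_point :: "'k set \<Rightarrow> 'a topology \<Rightarrow> 'a \<Rightarrow> bool" where
  "P_kappa_point K Y p \<longleftrightarrow> p \<in> topspace Y \<and>
     (\<forall>\<N>. (\<forall>N\<in>\<N>. neighbourhood Y p N) \<and> card_lt \<N> K \<longrightarrow>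
        (\<exists>V. openin Y V \<and> p \<in> V \<and> V \<subseteq> \<Inter>\<N>))"

end

theory Submission
  imports Defs
begin

unbundle cardinal_syntax

abbreviation small :: "'k itself \<Rightarrow> 'x set \<Rightarrow> bool" where
  "small K A \<equiv> card_lt A (UNIV :: 'k set)"

lemma small_subset: "card_lt A (UNIV::'k set) \<Longrightarrow> B \<subseteq> A \<Longrightarrow> card_lt B (UNIV::'k set)"
  unfolding card_lt_def by (rule ordLeq_ordLess_trans[OF card_of_mono1])

lemma small_image: "card_lt A (UNIV::'k set) \<Longrightarrow> card_lt (f ` A) (UNIV::'k set)"
  unfolding card_lt_def by (rule ordLeq_ordLess_trans[OF card_of_image])

lemma small_finite: "infinite (UNIV::'k set) \<Longrightarrow> finite A \<Longrightarrow> card_lt A (UNIV::'k set)"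
  unfolding card_lt_def
  by (rule finite_ordLess_infinite) (use card_of_Well_order[of A] card_of_Well_order[of "UNIV::'k set"] in \<open>auto simp: Field_card_of\<close>)

lemma small_Un: "infinite (UNIV::'k set) \<Longrightarrow> card_lt A (UNIV::'k set) \<Longrightarrow> card_lt B (UNIV::'k set)
  \<Longrightarrow> card_lt (A \<union> B) (UNIV::'k set)"
  unfolding card_lt_def by (rule card_of_Un_ordLess_infinite)

lemma small_Times_aux: "infinite (UNIV::'k set) \<Longrightarrow> |A| \<le>o |B| \<Longrightarrow> card_lt B (UNIV::'k set)
  \<Longrightarrow> card_lt (A \<times> B) (UNIV::'k set)"
proof (cases "finite B")
  case True
  assume "infinite (UNIV::'k set)" "|A| \<le>o |B|"
  have "finite A" by (rule card_of_ordLeq_finite[OF \<open>|A| \<le>o |B|\<close> True])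
  then have "finite (A \<times> B)" using True by simp
  then show ?thesis by (rule small_finite[OF \<open>infinite (UNIV::'k set)\<close>])
next
  case False
  assume a: "infinite (UNIV::'k set)" "|A| \<le>o |B|" "card_lt B (UNIV::'k set)"
  have "|A \<times> B| \<le>o |B \<times> B|" by (rule card_of_Times_mono1[OF a(2)])
  moreover have "|B \<times> B| =o |B|" by (rule card_of_Times_same_infinite[OF False])
  ultimately have "|A \<times> B| \<le>o |B|" by (rule ordLeq_ordIso_trans)
  then show ?thesis using a(3) unfolding card_lt_def by (rule ordLeq_ordLess_trans)
qed

lemma small_Times: "infinite (UNIV::'k set) \<Longrightarrow> card_lt A (UNIV::'k set) \<Longrightarrow> card_lt B (UNIV::'k set)
  \<Longrightarrow> card_lt (A \<times> B) (UNIV::'k set)"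
proof -
  assume a: "infinite (UNIV::'k set)" "card_lt A (UNIV::'k set)" "card_lt B (UNIV::'k set)"
  have "|A| \<le>o |B| \<or> |B| \<le>o |A|" by (rule ordLeq_total[OF card_of_Well_order card_of_Well_order])
  then show ?thesis
  proof
    assume "|A| \<le>o |B|" then show ?thesis using small_Times_aux a(1,3) by blast
  next
    assume "|B| \<le>o |A|"
    then have "card_lt (B \<times> A) (UNIV::'k set)" using small_Times_aux a(1,2) by blast
    moreover have "A \<times> B = (\<lambda>(x,y). (y,x)) ` (B \<times> A)" by auto
    ultimately show ?thesis using small_image[of "B \<times> A" "\<lambda>(x,y). (y,x)"] by simp
  qed
qed

lemma small_underS: "card_order r \<Longrightarrow> card_lt (underS r a) (UNIV::'k set)"
  for r :: "'k rel"
proof -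
  assume c: "card_order r"
  have cc: "UNIV = Field r \<and> Card_order r" by (rule card_order_on_Card_order[OF c])
  then have "|underS r a| <o r" by (intro card_of_underS) auto
  moreover have "r =o |UNIV::'k set|" using c by (rule card_of_unique)
  ultimately show ?thesis unfolding card_lt_def by (rule ordLess_ordIso_trans)
qed




locale wo_k =
  fixes r :: "'k rel"
  assumes card: "card_order r" and inf: "infinite (UNIV::'k set)"
begin

lemma WO: "well_order_on UNIV r" using card unfolding card_order_on_def by blast

lemma refl: "(a,a) \<in> r"
  using WO unfolding well_order_on_def linear_order_on_def partial_order_on_def preorder_on_def refl_on_def by blast

lemma trans: "(a,b) \<in> r \<Longrightarrow> (b,c) \<in> r \<Longrightarrow> (a,c) \<in> r"
  using WO unfolding well_order_on_def linear_order_on_def partial_order_on_def preorder_on_def trans_def by blast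

lemma antisym: "(a,b) \<in> r \<Longrightarrow> (b,a) \<in> r \<Longrightarrow> a = b"
  using WO unfolding well_order_on_def linear_order_on_def partial_order_on_def antisym_def by blast

lemma total: "(a,b) \<in> r \<or> (b,a) \<in> r"
proof (cases "a = b")
  case True then show ?thesis using refl by simp
next
  case False then show ?thesis
    using WO unfolding well_order_on_def linear_order_on_def total_on_def by blast
qed

lemma wf: "wf (r - Id)"
  using WO unfolding well_order_on_def by blast

lemma underS_iff: "b \<in> underS r a \<longleftrightarrow> (b,a) \<in> r \<and> b \<noteq> a"
  unfolding underS_def by blast

lemma under_iff: "b \<in> under r a \<longleftrightarrow> (b,a) \<in> r"
  unfolding under_def by blast

lemma not_in_underS: "a \<notin> underS r a" by (simp add: underS_iff)

lemma under_sub_underS: "b \<in> underS r a \<Longrightarrow> under r b \<subseteq> underS r a"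
  unfolding underS_def under_def using trans antisym by blast

lemma underS_mono: "(a,b) \<in> r \<Longrightarrow> underS r a \<subseteq> underS r b"
  unfolding underS_def using trans antisym by blast

lemma underS_trans: "b \<in> underS r a \<Longrightarrow> c \<in> underS r b \<Longrightarrow> c \<in> underS r a"
  unfolding underS_iff using trans antisym by blast

lemma not_le_imp: "(a,b) \<notin> r \<Longrightarrow> b \<in> underS r a"
  unfolding underS_iff using total refl by blast

lemma small_us: "card_lt (underS r a) (UNIV::'k set)"
  by (rule small_underS[OF card])

end


definition hh :: "'k rel \<Rightarrow> 'k \<Rightarrow> ('k \<Rightarrow> 'k set \<Rightarrow> 'a set) \<Rightarrow> 'k set \<Rightarrow> 'a set" where
  "hh r al Hp S = (\<Union>\<beta>\<in>underS r al. Hp \<beta> S)"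

definition Bs :: "'k rel \<Rightarrow> 'k \<Rightarrow> ('k \<Rightarrow> 'a set) \<Rightarrow> ('k set \<times> 'a set) set" where
  "Bs r al Kp = insert ({},{}) ((\<lambda>\<beta>. (underS r \<beta>, Kp \<beta>)) ` underS r al)"

definition sig :: "'k rel \<Rightarrow> ('k \<Rightarrow> 'k \<Rightarrow> 'k set) \<Rightarrow> 'k \<Rightarrow> 'k \<Rightarrow> bool \<Rightarrow> 'k set" where
  "sig r En al \<xi> s = (if s then En al \<xi> \<inter> underS r al else underS r al - En al \<xi>)"

definition eps :: "'a set \<Rightarrow> ('k \<Rightarrow> 'a set) \<Rightarrow> 'k \<Rightarrow> bool \<Rightarrow> 'a set" where
  "eps K' C \<xi> s = (if s then C \<xi> else K' - C \<xi>)"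

definition fam :: "'k rel \<Rightarrow> ('k \<Rightarrow> 'k \<Rightarrow> 'k set) \<Rightarrow> 'k \<Rightarrow> 'a set \<Rightarrow> ('k \<Rightarrow> 'a set) \<Rightarrow> ('k \<Rightarrow> 'k set \<Rightarrow> 'a set)
   \<Rightarrow> ('k \<Rightarrow> 'a set) \<Rightarrow> 'k \<Rightarrow> 'k set \<Rightarrow> 'a set set" where
  "fam r En al K' Kp Hp C \<xi> S =
     (\<lambda>\<beta>. Hp \<beta> S) ` underS r al
   \<union> (\<lambda>(\<eta>,t,B,Kb). eps K' C \<eta> t - Kb) ` {(\<eta>,t,B,Kb). \<eta> \<in> underS r \<xi> \<and> (B,Kb) \<in> Bs r al Kp \<and> sig r En al \<eta> t \<inter> (underS r al - S) \<subseteq> B}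
   \<union> (\<lambda>(B,Kb). K' - Kb) ` {(B,Kb). (B,Kb) \<in> Bs r al Kp \<and> underS r al - S \<subseteq> B}"

definition cstep :: "'a topology \<Rightarrow> 'k rel \<Rightarrow> ('k \<Rightarrow> 'k \<Rightarrow> 'k set) \<Rightarrow> 'k \<Rightarrow> 'a set \<Rightarrow> ('k \<Rightarrow> 'a set) \<Rightarrow> ('k \<Rightarrow> 'k set \<Rightarrow> 'a set)
   \<Rightarrow> ('k \<Rightarrow> 'a set) \<Rightarrow> 'k \<Rightarrow> 'a set" where
  "cstep X r En al K' Kp Hp C \<xi> =
     (SOME D. clopenin X D \<and> \<Union>(fam r En al K' Kp Hp C \<xi> (sig r En al \<xi> True)) \<subseteq> D \<and>
        D \<inter> \<Union>(fam r En al K' Kp Hp C \<xi> (sig r En al \<xi> False)) = {}) \<inter> K'"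

definition Cseq where "Cseq X r En al K' Kp Hp = wfrec (r - Id) (cstep X r En al K' Kp Hp)"

definition pick :: "'k rel \<Rightarrow> ('k \<Rightarrow> 'k \<Rightarrow> 'k set) \<Rightarrow> 'k \<Rightarrow> 'k set \<Rightarrow> 'k \<times> bool" where
  "pick r En al S = (SOME z. sig r En al (fst z) (snd z) = S \<inter> underS r al)"

definition eS where
  "eS X r En al K' Kp Hp S = (if underS r al = {} then {} else
     eps K' (Cseq X r En al K' Kp Hp) (fst (pick r En al S)) (snd (pick r En al S)))"

locale stage = wo_k r for r :: "'k rel" +
  fixes X :: "'a topology" and En :: "'k \<Rightarrow> 'k \<Rightarrow> 'k set" and al :: 'k
    and K' :: "'a set" and Kp :: "'k \<Rightarrow> 'a set" and Hp :: "'k \<Rightarrow> 'k set \<Rightarrow> 'a set"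
  assumes En: "\<And>S. S \<subseteq> underS r al \<Longrightarrow> \<exists>\<xi>. En al \<xi> \<inter> underS r al = S"
  and sep: "\<And>\<F> P Q. (\<forall>C\<in>\<F>. clopenin X C) \<Longrightarrow> card_lt \<F> (UNIV::'k set) \<Longrightarrow> openin X P \<Longrightarrow> openin X Q
      \<Longrightarrow> P \<inter> Q = {} \<Longrightarrow> P \<union> Q = \<Union>\<F> \<Longrightarrow> \<exists>C. clopenin X C \<and> P \<subseteq> C \<and> C \<inter> Q = {}"
  and ne: "underS r al \<noteq> {}"
  and K'c: "clopenin X K'" and K'sub: "\<And>\<beta>. \<beta> \<in> underS r al \<Longrightarrow> Kp \<beta> \<subseteq> K'"
  and S1: "\<And>\<beta>. \<beta> \<in> underS r al \<Longrightarrow> clopenin X (Kp \<beta>)"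
  and S2: "\<And>\<beta> \<gamma>. \<beta> \<in> underS r al \<Longrightarrow> \<gamma> \<in> underS r al \<Longrightarrow> (\<beta>,\<gamma>) \<in> r \<Longrightarrow> Kp \<beta> \<subseteq> Kp \<gamma>"
  and S3: "\<And>\<beta> S. \<beta> \<in> underS r al \<Longrightarrow> clopenin X (Hp \<beta> S) \<and> Hp \<beta> S \<subseteq> Kp \<beta>"
  and S4: "\<And>\<beta> S. \<beta> \<in> underS r al \<Longrightarrow> Hp \<beta> (-S) = Kp \<beta> - Hp \<beta> S"
  and S5: "\<And>\<beta> S. \<beta> \<in> underS r al \<Longrightarrow> Hp \<beta> S = Hp \<beta> (S \<inter> under r \<beta>)"
  and S6: "\<And>\<beta> \<gamma> S. \<beta> \<in> underS r al \<Longrightarrow> \<gamma> \<in> underS r al \<Longrightarrow> (\<beta>,\<gamma>) \<in> r \<Longrightarrow> Hp \<gamma> S \<inter> Kp \<beta> = Hp \<beta> S"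
  and S7: "\<And>\<beta> S T. \<beta> \<in> underS r al \<Longrightarrow> S \<inter> T \<inter> under r \<beta> = {} \<Longrightarrow> Hp \<beta> S \<inter> Hp \<beta> T = {}"
  and S8: "\<And>\<beta> \<gamma> S T. \<beta> \<in> underS r al \<Longrightarrow> \<gamma> \<in> underS r \<beta> \<Longrightarrow> S \<inter> T \<inter> under r \<beta> \<subseteq> underS r \<gamma>
      \<Longrightarrow> Hp \<beta> S \<inter> Hp \<beta> T \<subseteq> Kp \<gamma>"
begin

abbreviation "U0 \<equiv> underS r al"
abbreviation "Y \<equiv> (\<Union>\<beta>\<in>U0. Kp \<beta>)"
abbreviation "h \<equiv> hh r al Hp"
abbreviation "BB \<equiv> Bs r al Kp"

lemma Hmono: "\<beta> \<in> U0 \<Longrightarrow> \<gamma> \<in> U0 \<Longrightarrow> (\<beta>,\<gamma>) \<in> r \<Longrightarrow> Hp \<beta> S \<subseteq> Hp \<gamma> S"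
  using S6[of \<beta> \<gamma> S] by blast

lemma hK: "\<beta> \<in> U0 \<Longrightarrow> h S \<inter> Kp \<beta> = Hp \<beta> S"
proof -
  assume b: "\<beta> \<in> U0"
  have "Hp \<gamma> S \<inter> Kp \<beta> \<subseteq> Hp \<beta> S" if g: "\<gamma> \<in> U0" for \<gamma>
  proof (cases "(\<beta>,\<gamma>) \<in> r")
    case True then show ?thesis using S6[OF b g] by blast
  next
    case False then have "(\<gamma>,\<beta>) \<in> r" using total by blast
    then show ?thesis using Hmono[OF g b] by blast
  qed
  moreover have "Hp \<beta> S \<subseteq> Kp \<beta>" using S3[OF b] by blast
  ultimately show ?thesis unfolding hh_def using b by blast
qed

lemma h_sub: "h S \<subseteq> Y" unfolding hh_def using S3 by blast

lemma h_open: "openin X (h S)" unfolding hh_def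
  by (rule openin_Union) (use S3 in \<open>auto simp: clopenin_def\<close>)

lemma Hcomp: "\<beta> \<in> U0 \<Longrightarrow> Hp \<beta> (U0 - S) = Kp \<beta> - Hp \<beta> S"
proof -
  assume b: "\<beta> \<in> U0"
  have "(U0 - S) \<inter> under r \<beta> = (-S) \<inter> under r \<beta>" using under_sub_underS[OF b] by blast
  then have "Hp \<beta> (U0 - S) = Hp \<beta> (-S)" using S5[OF b, of "U0 - S"] S5[OF b, of "-S"] by simp
  then show ?thesis using S4[OF b] by simp
qed

lemma h_comp: "Y - h S = h (U0 - S)"
proof
  show "Y - h S \<subseteq> h (U0 - S)"
  proof
    fix x assume x: "x \<in> Y - h S"
    then obtain \<beta> where b: "\<beta> \<in> U0" "x \<in> Kp \<beta>" by blast
    then have "x \<notin> Hp \<beta> S" using x unfolding hh_def by blast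
    then show "x \<in> h (U0 - S)" using Hcomp[OF b(1)] b unfolding hh_def by blast
  qed
next
  show "h (U0 - S) \<subseteq> Y - h S"
  proof
    fix x assume "x \<in> h (U0 - S)"
    then obtain \<beta> where b: "\<beta> \<in> U0" "x \<in> Hp \<beta> (U0 - S)" unfolding hh_def by blast
    then have x: "x \<in> Kp \<beta>" "x \<notin> Hp \<beta> S" using Hcomp[OF b(1)] by auto
    then have "x \<notin> h S" using hK[OF b(1), of S] by blast
    then show "x \<in> Y - h S" using x b by blast
  qed
qed

lemma h_inter: "h S = h (S \<inter> U0)"
proof -
  have "Hp \<beta> S = Hp \<beta> (S \<inter> U0)" if b: "\<beta> \<in> U0" for \<beta>
    using S5[OF b, of S] S5[OF b, of "S \<inter> U0"] under_sub_underS[OF b]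
    by (metis inf.absorb_iff2 inf_assoc)
  then show ?thesis unfolding hh_def by simp
qed

lemma Bs_cases: "(B,Kb) \<in> BB \<Longrightarrow> (B = {} \<and> Kb = {}) \<or> (\<exists>\<delta>\<in>U0. B = underS r \<delta> \<and> Kb = Kp \<delta>)"
  unfolding Bs_def by blast

lemma Bs_props: "(B,Kb) \<in> BB \<Longrightarrow> B \<subseteq> U0 \<and> clopenin X Kb \<and> Kb \<subseteq> K'"
proof -
  assume "(B,Kb) \<in> BB"
  then consider "B = {}" "Kb = {}" | \<delta> where "\<delta>\<in>U0" "B = underS r \<delta>" "Kb = Kp \<delta>"
    using Bs_cases by blast
  then show ?thesis
  proof cases
    case 1 then show ?thesis by (simp add: clopenin_def)
  next
    case 2 then show ?thesis using S1 K'sub underS_trans by blast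
  qed
qed

lemma Bs_empty: "({},{}) \<in> BB" unfolding Bs_def by blast

lemma Bs_not_top: "(B,Kb) \<in> BB \<Longrightarrow> \<not> U0 \<subseteq> B"
  using Bs_cases[of B Kb] ne not_in_underS by blast

lemma Bs_max: "(B,Kb) \<in> BB \<Longrightarrow> (B',Kb') \<in> BB \<Longrightarrow>
   \<exists>B'' Kb''. (B'',Kb'') \<in> BB \<and> B \<union> B' \<subseteq> B'' \<and> Kb'' \<subseteq> Kb \<union> Kb'"
proof -
  assume a: "(B,Kb) \<in> BB" "(B',Kb') \<in> BB"
  show ?thesis
  proof (cases "B = {} \<and> Kb = {}")
    case True then show ?thesis using a(2) by blast
  next
    case False
    then obtain \<delta> where d: "\<delta>\<in>U0" "B = underS r \<delta>" "Kb = Kp \<delta>" using Bs_cases[OF a(1)] by blast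
    show ?thesis
    proof (cases "B' = {} \<and> Kb' = {}")
      case True then show ?thesis using a(1) by blast
    next
      case False
      then obtain \<delta>' where d': "\<delta>'\<in>U0" "B' = underS r \<delta>'" "Kb' = Kp \<delta>'" using Bs_cases[OF a(2)] by blast
      show ?thesis
      proof (cases "(\<delta>,\<delta>') \<in> r")
        case True
        then show ?thesis using a(2) d d' underS_mono[OF True] by blast
      next
        case False
        then have "(\<delta>',\<delta>) \<in> r" using total by blast
        then show ?thesis using a(1) d d' underS_mono[of \<delta>' \<delta>] by blast
      qed
    qed
  qed
qed

lemma H_disj: "m \<in> U0 \<Longrightarrow> (B,Kb) \<in> BB \<Longrightarrow> S \<inter> T \<inter> under r m \<subseteq> B \<Longrightarrow> Hp m S \<inter> Hp m T \<subseteq> Kb"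
proof -
  assume m: "m \<in> U0" and b: "(B,Kb) \<in> BB" and st: "S \<inter> T \<inter> under r m \<subseteq> B"
  show ?thesis
  proof (cases "B = {} \<and> Kb = {}")
    case True then show ?thesis using S7[OF m, of S T] st by blast
  next
    case False
    then obtain \<delta> where d: "\<delta>\<in>U0" "B = underS r \<delta>" "Kb = Kp \<delta>" using Bs_cases[OF b] by blast
    show ?thesis
    proof (cases "\<delta> \<in> underS r m")
      case True then show ?thesis using S8[OF m True, of S T] st d by blast
    next
      case False
      then have "(m,\<delta>) \<in> r" using not_le_imp by blast
      then show ?thesis using S2[OF m d(1)] S3[OF m] d by blast
    qed
  qed
qed

lemma h_disj: "(B,Kb) \<in> BB \<Longrightarrow> S \<inter> T \<inter> U0 \<subseteq> B \<Longrightarrow> h S \<inter> h T \<subseteq> Kb"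
proof
  fix x assume b: "(B,Kb) \<in> BB" and st: "S \<inter> T \<inter> U0 \<subseteq> B" and x: "x \<in> h S \<inter> h T"
  then obtain \<beta> \<gamma> where bg: "\<beta> \<in> U0" "\<gamma> \<in> U0" "x \<in> Hp \<beta> S" "x \<in> Hp \<gamma> T" unfolding hh_def by blast
  have "\<exists>m\<in>U0. x \<in> Hp m S \<and> x \<in> Hp m T"
  proof (cases "(\<beta>,\<gamma>) \<in> r")
    case True then show ?thesis using Hmono[OF bg(1,2) True] bg by blast
  next
    case False then have "(\<gamma>,\<beta>) \<in> r" using total by blast
    then show ?thesis using Hmono[OF bg(2,1)] bg by blast
  qed
  then obtain m where m: "m \<in> U0" "x \<in> Hp m S" "x \<in> Hp m T" by blast
  have "S \<inter> T \<inter> under r m \<subseteq> B" using st under_sub_underS[OF m(1)] by blast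
  then show "x \<in> Kb" using H_disj[OF m(1) b] m by blast
qed


abbreviation "C \<equiv> Cseq X r En al K' Kp Hp"
abbreviation "\<sigma> \<equiv> sig r En al"
abbreviation "\<epsilon> \<equiv> eps K' C"
abbreviation "FF \<equiv> fam r En al K' Kp Hp C"

definition Inv where
  "Inv \<xi> \<longleftrightarrow> clopenin X (C \<xi>) \<and> C \<xi> \<subseteq> K' \<and> C \<xi> \<inter> Y = h (\<sigma> \<xi> True) \<and>
     (\<forall>\<eta> s t B Kb. (\<eta>,\<xi>) \<in> r \<longrightarrow> (B,Kb) \<in> BB \<longrightarrow> \<sigma> \<xi> s \<inter> \<sigma> \<eta> t \<subseteq> B \<longrightarrow> \<epsilon> \<xi> s \<inter> \<epsilon> \<eta> t \<subseteq> Kb)"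

lemma sig_sub: "\<sigma> \<xi> s \<subseteq> U0" unfolding sig_def by auto

lemma sig_neg: "\<sigma> \<xi> (\<not> s) = U0 - \<sigma> \<xi> s" unfolding sig_def by auto

lemma Y_sub: "Y \<subseteq> K'" using K'sub by blast

lemma clopen_diff: "clopenin X A \<Longrightarrow> clopenin X B \<Longrightarrow> clopenin X (A - B)"
  unfolding clopenin_def using openin_diff closedin_diff by blast

lemma clopen_Int: "clopenin X A \<Longrightarrow> clopenin X B \<Longrightarrow> clopenin X (A \<inter> B)"
  unfolding clopenin_def using openin_Int closedin_Int by blast

lemma eps_props:
  assumes "Inv \<xi>"
  shows "clopenin X (\<epsilon> \<xi> s)" "\<epsilon> \<xi> s \<subseteq> K'" "\<epsilon> \<xi> (\<not> s) = K' - \<epsilon> \<xi> s" "\<epsilon> \<xi> s \<inter> Y = h (\<sigma> \<xi> s)"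
proof -
  have c: "clopenin X (C \<xi>)" "C \<xi> \<subseteq> K'" "C \<xi> \<inter> Y = h (\<sigma> \<xi> True)" using assms unfolding Inv_def by auto
  show "clopenin X (\<epsilon> \<xi> s)" unfolding eps_def using c clopen_diff[OF K'c c(1)] by simp
  show "\<epsilon> \<xi> s \<subseteq> K'" unfolding eps_def using c by auto
  show "\<epsilon> \<xi> (\<not> s) = K' - \<epsilon> \<xi> s" unfolding eps_def using c by auto
  have "(K' - C \<xi>) \<inter> Y = Y - h (\<sigma> \<xi> True)" using c Y_sub by blast
  also have "\<dots> = h (U0 - \<sigma> \<xi> True)" by (rule h_comp)
  also have "\<dots> = h (\<sigma> \<xi> False)" using sig_neg[of \<xi> True] by simp
  finally show "\<epsilon> \<xi> s \<inter> Y = h (\<sigma> \<xi> s)" unfolding eps_def using c by (cases s) auto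
qed

lemma PR:
  assumes "Inv \<eta>" "Inv \<eta>'" "(B,Kb) \<in> BB" "\<sigma> \<eta> t \<inter> \<sigma> \<eta>' t' \<subseteq> B"
  shows "\<epsilon> \<eta> t \<inter> \<epsilon> \<eta>' t' \<subseteq> Kb"
proof (cases "(\<eta>',\<eta>) \<in> r")
  case True then show ?thesis using assms(1,3,4) unfolding Inv_def by blast
next
  case False then have "(\<eta>,\<eta>') \<in> r" using total by blast
  moreover have "\<sigma> \<eta>' t' \<inter> \<sigma> \<eta> t \<subseteq> B" using assms(4) by blast
  ultimately have "\<epsilon> \<eta>' t' \<inter> \<epsilon> \<eta> t \<subseteq> Kb" using assms(2,3) unfolding Inv_def by blast
  then show ?thesis by blast
qed

lemma fam_cases:
  assumes "A \<in> FF \<xi> S"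
  obtains (H) \<beta> where "\<beta> \<in> U0" "A = Hp \<beta> S"
  | (E) \<eta> t B Kb where "\<eta> \<in> underS r \<xi>" "(B,Kb) \<in> BB" "\<sigma> \<eta> t \<inter> (U0 - S) \<subseteq> B" "A = \<epsilon> \<eta> t - Kb"
  | (K) B Kb where "(B,Kb) \<in> BB" "U0 - S \<subseteq> B" "A = K' - Kb"
  using assms unfolding fam_def by blast

lemma fam_disj:
  assumes IH: "\<And>\<eta>. \<eta> \<in> underS r \<xi> \<Longrightarrow> Inv \<eta>" and S: "S \<subseteq> U0"
    and A: "A \<in> FF \<xi> S" and A': "A' \<in> FF \<xi> (U0 - S)"
  shows "A \<inter> A' = {}"
proof (rule ccontr)
  assume "A \<inter> A' \<noteq> {}"
  then obtain x where x: "x \<in> A" "x \<in> A'" by blast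
  have S2': "U0 - (U0 - S) = S" using S by blast
  have hY: "\<And>\<beta> T. \<beta> \<in> U0 \<Longrightarrow> x \<in> Hp \<beta> T \<Longrightarrow> x \<in> h T \<and> x \<in> Y"
    unfolding hh_def using S3 by blast
  have eY: "\<And>\<eta> t. \<eta> \<in> underS r \<xi> \<Longrightarrow> x \<in> \<epsilon> \<eta> t \<Longrightarrow> x \<in> Y \<Longrightarrow> x \<in> h (\<sigma> \<eta> t)"
    using eps_props(4)[OF IH] by blast
  show False
  using A
  proof (cases rule: fam_cases)
    case (H \<beta>)
    then have xh: "x \<in> h S" "x \<in> Y" using hY x(1) by auto
    from A' show False
    proof (cases rule: fam_cases)
      case (H \<beta>')
      then have "x \<in> h (U0 - S)" using hY x(2) by auto
      then show False using h_disj[OF Bs_empty, of S "U0 - S"] xh by blast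
    next
      case (E \<eta> t B Kb)
      then have "x \<in> h (\<sigma> \<eta> t)" using eY x(2) xh by blast
      moreover have "S \<inter> \<sigma> \<eta> t \<inter> U0 \<subseteq> B" using E(3) S2' by blast
      ultimately show False using h_disj[OF E(2)] xh E(4) x(2) by blast
    next
      case (K B Kb)
      then have "S \<inter> S \<inter> U0 \<subseteq> B" using S2' by blast
      then show False using h_disj[OF K(1)] xh K(3) x(2) by blast
    qed
  next
    case (E \<eta> t B Kb)
    note E1 = E
    from A' show False
    proof (cases rule: fam_cases)
      case (H \<beta>')
      then have xh: "x \<in> h (U0 - S)" "x \<in> Y" using hY x(2) by auto
      then have "x \<in> h (\<sigma> \<eta> t)" using eY E1 x(1) by blast
      moreover have "\<sigma> \<eta> t \<inter> (U0 - S) \<inter> U0 \<subseteq> B" using E1(3) by blast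
      ultimately show False using h_disj[OF E1(2)] xh E1(4) x(1) by blast
    next
      case (E \<eta>' t' B' Kb')
      obtain B'' Kb'' where m: "(B'',Kb'') \<in> BB" "B \<union> B' \<subseteq> B''" "Kb'' \<subseteq> Kb \<union> Kb'"
        using Bs_max[OF E1(2) E(2)] by blast
      have "\<sigma> \<eta> t \<inter> \<sigma> \<eta>' t' \<subseteq> B''" using E1(3) E(3) S2' sig_sub[of \<eta> t] m(2) by blast
      then have "\<epsilon> \<eta> t \<inter> \<epsilon> \<eta>' t' \<subseteq> Kb''" using PR[OF IH[OF E1(1)] IH[OF E(1)] m(1)] by blast
      then show False using x E1(4) E(4) m(3) by blast
    next
      case (K B' Kb')
      obtain B'' Kb'' where m: "(B'',Kb'') \<in> BB" "B \<union> B' \<subseteq> B''" "Kb'' \<subseteq> Kb \<union> Kb'"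
        using Bs_max[OF E1(2) K(1)] by blast
      have "\<sigma> \<eta> t \<inter> \<sigma> \<eta> t \<subseteq> B''" using E1(3) K(2) S2' sig_sub[of \<eta> t] m(2) by blast
      then have "\<epsilon> \<eta> t \<inter> \<epsilon> \<eta> t \<subseteq> Kb''" using PR[OF IH[OF E1(1)] IH[OF E1(1)] m(1)] by blast
      then show False using x E1(4) K(3) m(3) by blast
    qed
  next
    case (K B Kb)
    note K1 = K
    from A' show False
    proof (cases rule: fam_cases)
      case (H \<beta>')
      then have xh: "x \<in> h (U0 - S)" "x \<in> Y" using hY x(2) by auto
      have "(U0 - S) \<inter> (U0 - S) \<inter> U0 \<subseteq> B" using K1(2) by blast
      then show False using h_disj[OF K1(1)] xh K1(3) x(1) by blast
    next
      case (E \<eta>' t' B' Kb')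
      obtain B'' Kb'' where m: "(B'',Kb'') \<in> BB" "B \<union> B' \<subseteq> B''" "Kb'' \<subseteq> Kb \<union> Kb'"
        using Bs_max[OF K1(1) E(2)] by blast
      have "\<sigma> \<eta>' t' \<inter> \<sigma> \<eta>' t' \<subseteq> B''" using K1(2) E(3) S2' sig_sub[of \<eta>' t'] m(2) by blast
      then have "\<epsilon> \<eta>' t' \<inter> \<epsilon> \<eta>' t' \<subseteq> Kb''" using PR[OF IH[OF E(1)] IH[OF E(1)] m(1)] by blast
      then show False using x E(4) K1(3) m(3) by blast
    next
      case (K B' Kb')
      obtain B'' Kb'' where m: "(B'',Kb'') \<in> BB" "B \<union> B' \<subseteq> B''" "Kb'' \<subseteq> Kb \<union> Kb'"
        using Bs_max[OF K1(1) K(1)] by blast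
      have "U0 \<subseteq> B''" using K1(2) K(2) S2' m(2) by blast
      then show False using Bs_not_top[OF m(1)] by blast
    qed
  qed
qed


lemma Cseq_unfold: "C \<xi> = cstep X r En al K' Kp Hp (cut C (r - Id) \<xi>) \<xi>"
  unfolding Cseq_def by (rule wfrec[OF wf])

lemma fam_cut: "fam r En al K' Kp Hp (cut C (r - Id) \<xi>) \<xi> S = FF \<xi> S"
proof -
  have c: "\<And>\<eta>. \<eta> \<in> underS r \<xi> \<Longrightarrow> cut C (r - Id) \<xi> \<eta> = C \<eta>" by (simp add: cut_apply underS_iff)
  have "(\<lambda>(\<eta>,t,B,Kb). eps K' (cut C (r - Id) \<xi>) \<eta> t - Kb) ` {(\<eta>,t,B,Kb). \<eta> \<in> underS r \<xi> \<and> (B,Kb) \<in> BB \<and> \<sigma> \<eta> t \<inter> (U0 - S) \<subseteq> B}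
      = (\<lambda>(\<eta>,t,B,Kb). eps K' C \<eta> t - Kb) ` {(\<eta>,t,B,Kb). \<eta> \<in> underS r \<xi> \<and> (B,Kb) \<in> BB \<and> \<sigma> \<eta> t \<inter> (U0 - S) \<subseteq> B}"
    by (rule image_cong[OF HOL.refl]) (auto simp: eps_def c)
  then show ?thesis unfolding fam_def by simp
qed

lemma Bs_small: "card_lt BB (UNIV::'k set)"
proof -
  have "BB = {({},{})} \<union> (\<lambda>\<beta>. (underS r \<beta>, Kp \<beta>)) ` U0" unfolding Bs_def by blast
  moreover have "card_lt ({({},{})} \<union> (\<lambda>\<beta>. (underS r \<beta>, Kp \<beta>)) ` U0) (UNIV::'k set)"
    by (rule small_Un[OF inf small_finite[OF inf] small_image[OF small_us]]) simp
  ultimately show ?thesis by simp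
qed

lemma fam_small: "card_lt (FF \<xi> S) (UNIV::'k set)"
proof -
  have a: "card_lt ((\<lambda>\<beta>. Hp \<beta> S) ` U0) (UNIV::'k set)" by (rule small_image[OF small_us])
  have bool: "card_lt (UNIV::bool set) (UNIV::'k set)" by (rule small_finite[OF inf]) simp
  have "card_lt (underS r \<xi> \<times> (UNIV::bool set) \<times> BB) (UNIV::'k set)"
    by (rule small_Times[OF inf small_us small_Times[OF inf bool Bs_small]])
  then have "card_lt {(\<eta>,t,B,Kb). \<eta> \<in> underS r \<xi> \<and> (B,Kb) \<in> BB \<and> \<sigma> \<eta> t \<inter> (U0 - S) \<subseteq> B} (UNIV::'k set)"
    by (rule small_subset) auto
  then have b: "card_lt ((\<lambda>(\<eta>,t,B,Kb). \<epsilon> \<eta> t - Kb) ` {(\<eta>,t,B,Kb). \<eta> \<in> underS r \<xi> \<and> (B,Kb) \<in> BB \<and> \<sigma> \<eta> t \<inter> (U0 - S) \<subseteq> B}) (UNIV::'k set)"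
    by (rule small_image)
  have "card_lt {(B,Kb). (B,Kb) \<in> BB \<and> U0 - S \<subseteq> B} (UNIV::'k set)"
    by (rule small_subset[OF Bs_small]) auto
  then have c: "card_lt ((\<lambda>(B,Kb). K' - Kb) ` {(B,Kb). (B,Kb) \<in> BB \<and> U0 - S \<subseteq> B}) (UNIV::'k set)"
    by (rule small_image)
  show ?thesis unfolding fam_def by (rule small_Un[OF inf small_Un[OF inf a b] c])
qed

lemma fam_clopen:
  assumes IH: "\<And>\<eta>. \<eta> \<in> underS r \<xi> \<Longrightarrow> Inv \<eta>" and A: "A \<in> FF \<xi> S"
  shows "clopenin X A"
  using A
proof (cases rule: fam_cases)
  case (H \<beta>) then show ?thesis using S3 by blast
next
  case (E \<eta> t B Kb) then show ?thesis using clopen_diff eps_props(1)[OF IH] Bs_props by blast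
next
  case (K B Kb) then show ?thesis using clopen_diff K'c Bs_props by blast
qed

lemma step:
  assumes IH: "\<And>\<eta>. \<eta> \<in> underS r \<xi> \<Longrightarrow> Inv \<eta>"
  shows "Inv \<xi>"
proof -
  define S where "S = \<sigma> \<xi> True"
  define PF where "PF = FF \<xi> S"
  define QF where "QF = FF \<xi> (\<sigma> \<xi> False)"
  have sF: "\<sigma> \<xi> False = U0 - S" unfolding S_def using sig_neg[of \<xi> True] by simp
  have Ssub: "S \<subseteq> U0" unfolding S_def by (rule sig_sub)
  have US: "U0 - (U0 - S) = S" using Ssub by blast
  have clo: "\<forall>A\<in>PF \<union> QF. clopenin X A" unfolding PF_def QF_def using fam_clopen[OF IH] by blast
  have sm: "card_lt (PF \<union> QF) (UNIV::'k set)" unfolding PF_def QF_def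
    by (rule small_Un[OF inf fam_small fam_small])
  have opP: "openin X (\<Union>PF)" using clo by (auto simp: clopenin_def intro!: openin_Union)
  have opQ: "openin X (\<Union>QF)" using clo by (auto simp: clopenin_def intro!: openin_Union)
  have dj: "\<Union>PF \<inter> \<Union>QF = {}"
    using fam_disj[OF IH Ssub] unfolding PF_def QF_def sF by blast
  obtain D where "clopenin X D" "\<Union>PF \<subseteq> D" "D \<inter> \<Union>QF = {}"
    using sep[OF clo sm opP opQ dj] by auto
  then have ex: "\<exists>D. clopenin X D \<and> \<Union>PF \<subseteq> D \<and> D \<inter> \<Union>QF = {}" by blast
  define D0 where "D0 = (SOME D. clopenin X D \<and> \<Union>PF \<subseteq> D \<and> D \<inter> \<Union>QF = {})"
  have D0: "clopenin X D0" "\<Union>PF \<subseteq> D0" "D0 \<inter> \<Union>QF = {}"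
    using someI_ex[OF ex] unfolding D0_def by blast+
  have Ceq: "C \<xi> = D0 \<inter> K'"
    using Cseq_unfold[of \<xi>] unfolding cstep_def fam_cut D0_def PF_def QF_def S_def by simp
  have c1: "clopenin X (C \<xi>)" using Ceq clopen_Int[OF D0(1) K'c] by simp
  have c2: "C \<xi> \<subseteq> K'" using Ceq by blast
  have hP: "h S \<subseteq> \<Union>PF" unfolding PF_def fam_def hh_def by blast
  have hQ: "h (U0 - S) \<subseteq> \<Union>QF" unfolding QF_def fam_def hh_def sF by blast
  have c3: "C \<xi> \<inter> Y = h S"
  proof
    show "h S \<subseteq> C \<xi> \<inter> Y" using hP D0(2) h_sub[of S] Y_sub Ceq by blast
  next
    show "C \<xi> \<inter> Y \<subseteq> h S"
    proof
      fix x assume x: "x \<in> C \<xi> \<inter> Y"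
      show "x \<in> h S"
      proof (rule ccontr)
        assume "x \<notin> h S"
        then have "x \<in> h (U0 - S)" using h_comp[of S] x by blast
        then show False using hQ D0(3) Ceq x by blast
      qed
    qed
  qed
  have c4: "\<epsilon> \<xi> s \<inter> \<epsilon> \<eta> t \<subseteq> Kb"
    if et: "(\<eta>,\<xi>) \<in> r" and b: "(B,Kb) \<in> BB" and st: "\<sigma> \<xi> s \<inter> \<sigma> \<eta> t \<subseteq> B" for \<eta> s t B Kb
  proof (cases "\<eta> = \<xi>")
    case False
    then have eu: "\<eta> \<in> underS r \<xi>" using et underS_iff by blast
    have ek: "\<epsilon> \<eta> t \<subseteq> K'" using eps_props(2)[OF IH[OF eu]] .
    show ?thesis
    proof (cases s)
      case True
      have "\<sigma> \<eta> t \<inter> (U0 - \<sigma> \<xi> False) \<subseteq> B" using st True US sF unfolding S_def by auto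
      then have "\<epsilon> \<eta> t - Kb \<subseteq> \<Union>QF" unfolding QF_def fam_def using eu b by blast
      moreover have "\<epsilon> \<xi> s = C \<xi>" using True by (simp add: eps_def)
      ultimately show ?thesis using D0(3) Ceq by blast
    next
      case False
      have "\<sigma> \<eta> t \<inter> (U0 - S) \<subseteq> B" using st False sF by auto
      then have "\<epsilon> \<eta> t - Kb \<subseteq> \<Union>PF" unfolding PF_def fam_def using eu b by blast
      moreover have "\<epsilon> \<xi> s = K' - C \<xi>" using False by (simp add: eps_def)
      ultimately show ?thesis using D0(2) Ceq ek by blast
    qed
  next
    case True
    note eq = True
    show ?thesis
    proof (cases "s = t")
      case False
      then show ?thesis using eq unfolding eps_def by (cases s) auto
    next
      case True
      show ?thesis
      proof (cases s)
        case True
        then have "S \<subseteq> B" using st eq \<open>s = t\<close> unfolding S_def by auto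
        then have "U0 - \<sigma> \<xi> False \<subseteq> B" using sF US by simp
        then have "K' - Kb \<subseteq> \<Union>QF" unfolding QF_def fam_def using b by blast
        moreover have "\<epsilon> \<xi> s = C \<xi>" "\<epsilon> \<eta> t = C \<xi>" using True \<open>s = t\<close> eq by (simp_all add: eps_def)
        ultimately show ?thesis using D0(3) Ceq by blast
      next
        case False
        then have "U0 - S \<subseteq> B" using st eq \<open>s = t\<close> sF by auto
        then have "K' - Kb \<subseteq> \<Union>PF" unfolding PF_def fam_def using b by blast
        moreover have "\<epsilon> \<xi> s = K' - C \<xi>" "\<epsilon> \<eta> t = K' - C \<xi>" using False \<open>s = t\<close> eq by (simp_all add: eps_def)
        ultimately show ?thesis using D0(2) Ceq by blast
      qed
    qed
  qed
  show ?thesis unfolding Inv_def using c1 c2 c3 c4 unfolding S_def by blast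
qed

lemma Inv_all: "Inv \<xi>"
  using wf
proof (induction \<xi> rule: wf_induct_rule)
  case (less x)
  show ?case by (rule step) (use less in \<open>auto simp: underS_iff\<close>)
qed


abbreviation "e \<equiv> eS X r En al K' Kp Hp"

lemma eps_wd: "\<sigma> \<xi> s = \<sigma> \<eta> t \<Longrightarrow> \<epsilon> \<xi> s = \<epsilon> \<eta> t"
proof -
  assume eq: "\<sigma> \<xi> s = \<sigma> \<eta> t"
  have a: "\<epsilon> \<xi> s \<subseteq> \<epsilon> \<eta> t" if "\<sigma> \<xi> s = \<sigma> \<eta> t" for \<xi> s \<eta> t
  proof -
    have "\<sigma> \<xi> s \<inter> \<sigma> \<eta> (\<not> t) \<subseteq> {}" using that sig_neg[of \<eta> t] by blast
    then have "\<epsilon> \<xi> s \<inter> \<epsilon> \<eta> (\<not> t) \<subseteq> {}" using PR[OF Inv_all Inv_all Bs_empty] by blast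
    then show ?thesis using eps_props(2,3)[OF Inv_all, of \<xi> s] eps_props(3)[OF Inv_all, of \<eta> t] by blast
  qed
  show ?thesis using a[OF eq] a[OF eq[symmetric]] by blast
qed

lemma pick_ok: "\<sigma> (fst (pick r En al S)) (snd (pick r En al S)) = S \<inter> U0"
proof -
  obtain \<xi> where "En al \<xi> \<inter> U0 = S \<inter> U0" using En[of "S \<inter> U0"] by blast
  then have "\<sigma> (fst (\<xi>,True)) (snd (\<xi>,True)) = S \<inter> U0" unfolding sig_def by simp
  then show ?thesis unfolding pick_def by (rule someI)
qed

lemma e_eps: "\<sigma> \<xi> s = S \<inter> U0 \<Longrightarrow> e S = \<epsilon> \<xi> s"
  unfolding eS_def using ne pick_ok[of S] eps_wd by simp

lemma e_props:
  shows "clopenin X (e S)" "e S \<subseteq> K'" "e S = e (S \<inter> U0)" "e (-S) = K' - e S" "e S \<inter> Y = h S"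
proof -
  obtain \<xi> s where p: "\<sigma> \<xi> s = S \<inter> U0" using pick_ok by blast
  have es: "e S = \<epsilon> \<xi> s" by (rule e_eps[OF p])
  show "clopenin X (e S)" using es eps_props(1)[OF Inv_all] by simp
  show "e S \<subseteq> K'" using es eps_props(2)[OF Inv_all] by simp
  show "e S = e (S \<inter> U0)" using es e_eps[of \<xi> s "S \<inter> U0"] p by simp
  have "\<sigma> \<xi> (\<not> s) = (-S) \<inter> U0" using sig_neg[of \<xi> s] p by blast
  then have "e (-S) = \<epsilon> \<xi> (\<not> s)" by (rule e_eps)
  then show "e (-S) = K' - e S" using es eps_props(3)[OF Inv_all] by simp
  show "e S \<inter> Y = h S" using es eps_props(4)[OF Inv_all, of \<xi> s] p h_inter[of S] by simp
qed

lemma e_disj: "(B,Kb) \<in> BB \<Longrightarrow> S \<inter> T \<inter> U0 \<subseteq> B \<Longrightarrow> e S \<inter> e T \<subseteq> Kb"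
proof -
  assume b: "(B,Kb) \<in> BB" and st: "S \<inter> T \<inter> U0 \<subseteq> B"
  obtain \<xi> s where p: "\<sigma> \<xi> s = S \<inter> U0" using pick_ok by blast
  obtain \<eta> t where q: "\<sigma> \<eta> t = T \<inter> U0" using pick_ok by blast
  have "\<sigma> \<xi> s \<inter> \<sigma> \<eta> t \<subseteq> B" using p q st by blast
  then have "\<epsilon> \<xi> s \<inter> \<epsilon> \<eta> t \<subseteq> Kb" using PR[OF Inv_all Inv_all b] by blast
  then show ?thesis using e_eps[OF p] e_eps[OF q] by simp
qed

end




definition Wsel :: "'a topology \<Rightarrow> 'k rel \<Rightarrow> 'a \<Rightarrow> 'k \<Rightarrow> ('k \<Rightarrow> 'a set) \<Rightarrow> 'a set" where
  "Wsel X r p al Kp = (if underS r al = {} then topspace X else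
     (SOME W. clopenin X W \<and> p \<in> W \<and> W \<inter> (\<Union>\<beta>\<in>underS r al. Kp \<beta>) = {}))"

definition N0sel :: "'a topology \<Rightarrow> 'a \<Rightarrow> 'a set \<Rightarrow> 'a set" where
  "N0sel X p W = (SOME N. clopenin X N \<and> N \<noteq> {} \<and> p \<notin> N \<and> N \<subseteq> W)"

definition ostep :: "'a topology \<Rightarrow> 'k rel \<Rightarrow> 'a \<Rightarrow> ('k \<Rightarrow> 'a set) \<Rightarrow> ('k \<Rightarrow> 'k \<Rightarrow> 'k set)
   \<Rightarrow> ('k \<Rightarrow> 'a set \<times> ('k set \<Rightarrow> 'a set)) \<Rightarrow> 'k \<Rightarrow> 'a set \<times> ('k set \<Rightarrow> 'a set)" where
  "ostep X r p V En prev al =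
    (let Kp = (\<lambda>\<beta>. fst (prev \<beta>)); Hp = (\<lambda>\<beta>. snd (prev \<beta>)); W = Wsel X r p al Kp;
         K' = topspace X - W; N = W \<inter> (V al \<union> N0sel X p W)
     in (K' \<union> N, \<lambda>S. eS X r En al K' Kp Hp S \<union> (if al \<in> S then N else {})))"

definition stages where "stages X r p V En = wfrec (r - Id) (ostep X r p V En)"

locale constr = wo_k r for r :: "'k rel" +
  fixes X :: "'a topology" and p :: 'a and V :: "'k \<Rightarrow> 'a set" and En :: "'k \<Rightarrow> 'k \<Rightarrow> 'k set"
  assumes pT: "p \<in> topspace X"
  and cb: "\<And>U x. openin X U \<Longrightarrow> x \<in> U \<Longrightarrow> \<exists>C. clopenin X C \<and> x \<in> C \<and> C \<subseteq> U"
  and noiso: "\<And>U. openin X U \<Longrightarrow> p \<in> U \<Longrightarrow> \<exists>q\<in>U. q \<noteq> p"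
  and closedp: "closedin X {p}"
  and sep: "\<And>\<F> P Q. (\<forall>C\<in>\<F>. clopenin X C) \<Longrightarrow> card_lt \<F> (UNIV::'k set) \<Longrightarrow> openin X P \<Longrightarrow> openin X Q
      \<Longrightarrow> P \<inter> Q = {} \<Longrightarrow> P \<union> Q = \<Union>\<F> \<Longrightarrow> \<exists>C. clopenin X C \<and> P \<subseteq> C \<and> C \<inter> Q = {}"
  and pk: "\<And>\<N>. (\<forall>N\<in>\<N>. clopenin X N \<and> p \<in> N) \<Longrightarrow> card_lt \<N> (UNIV::'k set) \<Longrightarrow>
      \<exists>W. clopenin X W \<and> p \<in> W \<and> W \<subseteq> \<Inter>\<N>"
  and Vclo: "\<And>\<alpha>. clopenin X (V \<alpha>)" and Vp: "\<And>\<alpha>. p \<notin> V \<alpha>"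
  and Vcov: "topspace X - {p} \<subseteq> (\<Union>\<alpha>. V \<alpha>)"
  and En: "\<And>\<alpha> S. S \<subseteq> underS r \<alpha> \<Longrightarrow> \<exists>\<xi>. En \<alpha> \<xi> \<inter> underS r \<alpha> = S"
begin

abbreviation "T \<equiv> topspace X"
abbreviation "ST \<equiv> stages X r p V En"
abbreviation "KK \<alpha> \<equiv> fst (ST \<alpha>)"
abbreviation "HH \<alpha> \<equiv> snd (ST \<alpha>)"

definition OK where
  "OK \<alpha> \<longleftrightarrow> clopenin X (KK \<alpha>) \<and> p \<notin> KK \<alpha> \<and> V \<alpha> \<subseteq> KK \<alpha> \<and> (\<forall>\<beta>. (\<beta>,\<alpha>) \<in> r \<longrightarrow> KK \<beta> \<subseteq> KK \<alpha>)
    \<and> (\<forall>S. clopenin X (HH \<alpha> S) \<and> HH \<alpha> S \<subseteq> KK \<alpha>) \<and> (\<forall>S. HH \<alpha> (-S) = KK \<alpha> - HH \<alpha> S)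
    \<and> (\<forall>S. HH \<alpha> S = HH \<alpha> (S \<inter> under r \<alpha>))
    \<and> (\<forall>S \<beta>. (\<beta>,\<alpha>) \<in> r \<longrightarrow> HH \<alpha> S \<inter> KK \<beta> = HH \<beta> S)
    \<and> (\<forall>S T. S \<inter> T \<inter> under r \<alpha> = {} \<longrightarrow> HH \<alpha> S \<inter> HH \<alpha> T = {})
    \<and> (\<forall>S T \<gamma>. \<gamma> \<in> underS r \<alpha> \<longrightarrow> S \<inter> T \<inter> under r \<alpha> \<subseteq> underS r \<gamma> \<longrightarrow> HH \<alpha> S \<inter> HH \<alpha> T \<subseteq> KK \<gamma>)
    \<and> HH \<alpha> {\<alpha>} \<noteq> {}"

lemma OKD:
  assumes "OK \<alpha>"
  shows OK_Kc: "clopenin X (KK \<alpha>)" and OK_pK: "p \<notin> KK \<alpha>" and OK_V: "V \<alpha> \<subseteq> KK \<alpha>"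
  and OK_Kmono: "\<And>\<beta>. (\<beta>,\<alpha>) \<in> r \<Longrightarrow> KK \<beta> \<subseteq> KK \<alpha>"
  and OK_Hc: "\<And>S. clopenin X (HH \<alpha> S)" and OK_HK: "\<And>S. HH \<alpha> S \<subseteq> KK \<alpha>"
  and OK_comp: "\<And>S. HH \<alpha> (-S) = KK \<alpha> - HH \<alpha> S"
  and OK_under: "\<And>S. HH \<alpha> S = HH \<alpha> (S \<inter> under r \<alpha>)"
  and OK_coh: "\<And>S \<beta>. (\<beta>,\<alpha>) \<in> r \<Longrightarrow> HH \<alpha> S \<inter> KK \<beta> = HH \<beta> S"
  and OK_disj: "\<And>S T. S \<inter> T \<inter> under r \<alpha> = {} \<Longrightarrow> HH \<alpha> S \<inter> HH \<alpha> T = {}"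
  and OK_bdisj: "\<And>S T \<gamma>. \<gamma> \<in> underS r \<alpha> \<Longrightarrow> S \<inter> T \<inter> under r \<alpha> \<subseteq> underS r \<gamma> \<Longrightarrow> HH \<alpha> S \<inter> HH \<alpha> T \<subseteq> KK \<gamma>"
  and OK_ne: "HH \<alpha> {\<alpha>} \<noteq> {}"
  using assms unfolding OK_def by auto

lemma clopen_diff: "clopenin X A \<Longrightarrow> clopenin X B \<Longrightarrow> clopenin X (A - B)"
  unfolding clopenin_def using openin_diff closedin_diff by blast

lemma clopen_Int: "clopenin X A \<Longrightarrow> clopenin X B \<Longrightarrow> clopenin X (A \<inter> B)"
  unfolding clopenin_def using openin_Int closedin_Int by blast

lemma clopen_Un: "clopenin X A \<Longrightarrow> clopenin X B \<Longrightarrow> clopenin X (A \<union> B)"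
  unfolding clopenin_def using openin_Un closedin_Un by blast

lemma clopen_sub: "clopenin X A \<Longrightarrow> A \<subseteq> T"
  unfolding clopenin_def using openin_subset by blast

lemma clopen_T: "clopenin X T" unfolding clopenin_def by simp

lemma ST_unfold: "ST \<alpha> = ostep X r p V En (cut ST (r - Id) \<alpha>) \<alpha>"
  unfolding stages_def by (rule wfrec[OF wf])

lemma step:
  assumes IH: "\<And>\<beta>. \<beta> \<in> underS r \<alpha> \<Longrightarrow> OK \<beta>"
  shows "OK \<alpha>"
proof -
  define prev where "prev = cut ST (r - Id) \<alpha>"
  define Kp where "Kp = (\<lambda>\<beta>. fst (prev \<beta>))"
  define Hp where "Hp = (\<lambda>\<beta>. snd (prev \<beta>))"
  have pv: "\<And>\<beta>. \<beta> \<in> underS r \<alpha> \<Longrightarrow> prev \<beta> = ST \<beta>"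
    unfolding prev_def by (simp add: cut_apply underS_iff)
  have KpK: "\<And>\<beta>. \<beta> \<in> underS r \<alpha> \<Longrightarrow> Kp \<beta> = KK \<beta>" using pv Kp_def by simp
  have HpH: "\<And>\<beta>. \<beta> \<in> underS r \<alpha> \<Longrightarrow> Hp \<beta> = HH \<beta>" using pv Hp_def by simp
  define U0 where "U0 = underS r \<alpha>"
  define Y where "Y = (\<Union>\<beta>\<in>U0. Kp \<beta>)"
  define W where "W = Wsel X r p \<alpha> Kp"
  define K' where "K' = T - W"
  define N where "N = W \<inter> (V \<alpha> \<union> N0sel X p W)"
  define e where "e = eS X r En \<alpha> K' Kp Hp"
  have STa: "ST \<alpha> = (K' \<union> N, \<lambda>S. e S \<union> (if \<alpha> \<in> S then N else {}))"
    using ST_unfold[of \<alpha>] unfolding ostep_def Let_def prev_def[symmetric] Kp_def[symmetric]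
      Hp_def[symmetric] W_def[symmetric] K'_def[symmetric] N_def[symmetric] e_def[symmetric] by simp
  have KKa: "KK \<alpha> = K' \<union> N" and HHa: "\<And>S. HH \<alpha> S = e S \<union> (if \<alpha> \<in> S then N else {})"
    using STa by simp_all
  have Wp: "clopenin X W \<and> p \<in> W \<and> W \<inter> Y = {}"
  proof (cases "U0 = {}")
    case True
    then show ?thesis unfolding W_def Wsel_def Y_def U0_def using pT clopen_T by simp
  next
    case False
    define NN where "NN = (\<lambda>\<beta>. T - KK \<beta>) ` U0"
    have nn1: "\<forall>M\<in>NN. clopenin X M \<and> p \<in> M"
      unfolding NN_def U0_def using OK_pK[OF IH] clopen_diff[OF clopen_T OK_Kc[OF IH]] pT by blast
    have nn2: "card_lt NN (UNIV::'k set)" unfolding NN_def U0_def by (rule small_image[OF small_us])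
    obtain W0 where W0: "clopenin X W0" "p \<in> W0" "W0 \<subseteq> \<Inter>NN" using pk[OF nn1 nn2] by blast
    have "W0 \<inter> Y = {}" using W0(3) False unfolding Y_def NN_def using KpK U0_def by auto
    then have ex: "\<exists>W. clopenin X W \<and> p \<in> W \<and> W \<inter> (\<Union>\<beta>\<in>underS r \<alpha>. Kp \<beta>) = {}"
      using W0 unfolding Y_def U0_def by blast
    show ?thesis using someI_ex[OF ex] False unfolding W_def Wsel_def Y_def U0_def by simp
  qed
  have WT: "W \<subseteq> T" using Wp clopen_sub by blast
  have K'c: "clopenin X K'" unfolding K'_def using clopen_diff[OF clopen_T] Wp by blast
  have KpT: "\<And>\<beta>. \<beta> \<in> U0 \<Longrightarrow> Kp \<beta> \<subseteq> T" using OK_Kc[OF IH] KpK clopen_sub unfolding U0_def by metis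
  have K'sub: "\<And>\<beta>. \<beta> \<in> U0 \<Longrightarrow> Kp \<beta> \<subseteq> K'" using Wp KpT unfolding K'_def Y_def by blast
  have pK': "p \<notin> K'" using Wp unfolding K'_def by blast
  have exN: "\<exists>N. clopenin X N \<and> N \<noteq> {} \<and> p \<notin> N \<and> N \<subseteq> W"
  proof -
    obtain q where q: "q \<in> W" "q \<noteq> p" using noiso Wp unfolding clopenin_def by blast
    have "openin X (W - {p})" using Wp closedp openin_diff unfolding clopenin_def by blast
    then obtain C0 where "clopenin X C0" "q \<in> C0" "C0 \<subseteq> W - {p}" using cb q by blast
    then show ?thesis by blast
  qed
  have N0: "clopenin X (N0sel X p W)" "N0sel X p W \<noteq> {}" "p \<notin> N0sel X p W" "N0sel X p W \<subseteq> W"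
    using someI_ex[OF exN] unfolding N0sel_def by blast+
  have Nc: "clopenin X N" unfolding N_def using clopen_Int[OF _ clopen_Un[OF Vclo N0(1)]] Wp by blast
  have Nne: "N \<noteq> {}" unfolding N_def using N0 by blast
  have pN: "p \<notin> N" unfolding N_def using N0 Vp by blast
  have NW: "N \<subseteq> W" unfolding N_def by blast
  have K'N: "K' \<inter> N = {}" using NW unfolding K'_def by blast
  have eP: "clopenin X (e S) \<and> e S \<subseteq> K' \<and> e S = e (S \<inter> U0) \<and> e (-S) = K' - e S \<and> e S \<inter> Y = hh r \<alpha> Hp S
      \<and> (\<forall>B Kb T'. (B,Kb) \<in> Bs r \<alpha> Kp \<longrightarrow> S \<inter> T' \<inter> U0 \<subseteq> B \<longrightarrow> e S \<inter> e T' \<subseteq> Kb)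
      \<and> (\<forall>\<beta>\<in>U0. hh r \<alpha> Hp S \<inter> Kp \<beta> = Hp \<beta> S)" for S
  proof (cases "U0 = {}")
    case True
    then have "K' = {}" using Wp unfolding K'_def W_def Wsel_def U0_def by simp
    then show ?thesis using True unfolding e_def eS_def U0_def Y_def hh_def by (simp add: clopenin_def)
  next
    case False
    interpret st: stage r X En \<alpha> K' Kp Hp
    proof (unfold_locales)
      show "\<And>S. S \<subseteq> underS r \<alpha> \<Longrightarrow> \<exists>\<xi>. En \<alpha> \<xi> \<inter> underS r \<alpha> = S" by (rule En)
      show "\<And>\<F> P Q. (\<forall>C\<in>\<F>. clopenin X C) \<Longrightarrow> card_lt \<F> (UNIV::'k set) \<Longrightarrow> openin X P \<Longrightarrow> openin X Q
      \<Longrightarrow> P \<inter> Q = {} \<Longrightarrow> P \<union> Q = \<Union>\<F> \<Longrightarrow> \<exists>C. clopenin X C \<and> P \<subseteq> C \<and> C \<inter> Q = {}" by (rule sep)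
      show "underS r \<alpha> \<noteq> {}" using False U0_def by simp
      show "clopenin X K'" by (rule K'c)
      show "\<And>\<beta>. \<beta> \<in> underS r \<alpha> \<Longrightarrow> Kp \<beta> \<subseteq> K'" using K'sub U0_def by simp
      show "\<And>\<beta>. \<beta> \<in> underS r \<alpha> \<Longrightarrow> clopenin X (Kp \<beta>)" using OK_Kc[OF IH] KpK by simp
      show "\<And>\<beta> \<gamma>. \<beta> \<in> underS r \<alpha> \<Longrightarrow> \<gamma> \<in> underS r \<alpha> \<Longrightarrow> (\<beta>,\<gamma>) \<in> r \<Longrightarrow> Kp \<beta> \<subseteq> Kp \<gamma>"
        using OK_Kmono[OF IH] KpK by simp
      show "\<And>\<beta> S. \<beta> \<in> underS r \<alpha> \<Longrightarrow> clopenin X (Hp \<beta> S) \<and> Hp \<beta> S \<subseteq> Kp \<beta>"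
        using OK_Hc[OF IH] OK_HK[OF IH] KpK HpH by simp
      show "\<And>\<beta> S. \<beta> \<in> underS r \<alpha> \<Longrightarrow> Hp \<beta> (-S) = Kp \<beta> - Hp \<beta> S"
        using OK_comp[OF IH] KpK HpH by simp
      show "\<And>\<beta> S. \<beta> \<in> underS r \<alpha> \<Longrightarrow> Hp \<beta> S = Hp \<beta> (S \<inter> under r \<beta>)"
      proof -
        fix \<beta> S assume b: "\<beta> \<in> underS r \<alpha>"
        show "Hp \<beta> S = Hp \<beta> (S \<inter> under r \<beta>)" unfolding HpH[OF b] by (rule OK_under[OF IH[OF b]])
      qed
      show "\<And>\<beta> \<gamma> S. \<beta> \<in> underS r \<alpha> \<Longrightarrow> \<gamma> \<in> underS r \<alpha> \<Longrightarrow> (\<beta>,\<gamma>) \<in> r \<Longrightarrow> Hp \<gamma> S \<inter> Kp \<beta> = Hp \<beta> S"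
        using OK_coh[OF IH] KpK HpH by simp
      show "\<And>\<beta> S T. \<beta> \<in> underS r \<alpha> \<Longrightarrow> S \<inter> T \<inter> under r \<beta> = {} \<Longrightarrow> Hp \<beta> S \<inter> Hp \<beta> T = {}"
        using OK_disj[OF IH] HpH by simp
      show "\<And>\<beta> \<gamma> S T. \<beta> \<in> underS r \<alpha> \<Longrightarrow> \<gamma> \<in> underS r \<beta> \<Longrightarrow> S \<inter> T \<inter> under r \<beta> \<subseteq> underS r \<gamma>
      \<Longrightarrow> Hp \<beta> S \<inter> Hp \<beta> T \<subseteq> Kp \<gamma>"
        using OK_bdisj[OF IH] HpH KpK underS_trans by simp
    qed
    have ee: "e = st.e" unfolding e_def by simp
    have "\<forall>B Kb T'. (B,Kb) \<in> Bs r \<alpha> Kp \<longrightarrow> S \<inter> T' \<inter> U0 \<subseteq> B \<longrightarrow> e S \<inter> e T' \<subseteq> Kb"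
      unfolding ee U0_def using st.e_disj by blast
    moreover have "e S \<inter> Y = hh r \<alpha> Hp S" unfolding ee Y_def U0_def by (rule st.e_props(5))
    moreover have "\<forall>\<beta>\<in>U0. hh r \<alpha> Hp S \<inter> Kp \<beta> = Hp \<beta> S" unfolding U0_def using st.hK by blast
    moreover have "clopenin X (e S)" "e S \<subseteq> K'" "e S = e (S \<inter> U0)" "e (-S) = K' - e S"
      unfolding ee U0_def by (rule st.e_props(1), rule st.e_props(2), rule st.e_props(3), rule st.e_props(4))
    ultimately show ?thesis by blast
  qed
  note c1 = conjunct1 and c2 = conjunct2
  have ec: "\<And>S. clopenin X (e S)" by (rule c1[OF eP])
  have eK: "\<And>S. e S \<subseteq> K'" by (rule c1[OF c2[OF eP]])
  have eI: "\<And>S. e S = e (S \<inter> U0)" by (rule c1[OF c2[OF c2[OF eP]]])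
  have eC: "\<And>S. e (-S) = K' - e S" by (rule c1[OF c2[OF c2[OF c2[OF eP]]]])
  have eY: "\<And>S. e S \<inter> Y = hh r \<alpha> Hp S" by (rule c1[OF c2[OF c2[OF c2[OF c2[OF eP]]]]])
  have eD: "\<And>B Kb S T'. (B,Kb) \<in> Bs r \<alpha> Kp \<Longrightarrow> S \<inter> T' \<inter> U0 \<subseteq> B \<Longrightarrow> e S \<inter> e T' \<subseteq> Kb"
    using c1[OF c2[OF c2[OF c2[OF c2[OF c2[OF eP]]]]]] by blast
  have hK: "\<And>S \<beta>. \<beta> \<in> U0 \<Longrightarrow> hh r \<alpha> Hp S \<inter> Kp \<beta> = Hp \<beta> S"
    using c2[OF c2[OF c2[OF c2[OF c2[OF c2[OF eP]]]]]] by blast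
  have NK: "\<And>\<beta>. \<beta> \<in> U0 \<Longrightarrow> N \<inter> KK \<beta> = {}" using NW Wp KpK unfolding Y_def U0_def by blast
  have aU: "\<alpha> \<in> under r \<alpha>" using refl under_iff by blast
  have U0u: "U0 \<subseteq> under r \<alpha>" unfolding U0_def underS_def under_def by blast
  have c1: "clopenin X (KK \<alpha>)" unfolding KKa by (rule clopen_Un[OF K'c Nc])
  have c2: "p \<notin> KK \<alpha>" unfolding KKa using pK' pN by blast
  have c3: "V \<alpha> \<subseteq> KK \<alpha>" unfolding KKa K'_def N_def using clopen_sub[OF Vclo] by blast
  have c4: "\<forall>\<beta>. (\<beta>,\<alpha>) \<in> r \<longrightarrow> KK \<beta> \<subseteq> KK \<alpha>"
  proof (intro allI impI)
    fix \<beta> assume b: "(\<beta>,\<alpha>) \<in> r"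
    show "KK \<beta> \<subseteq> KK \<alpha>"
    proof (cases "\<beta> = \<alpha>")
      case False then have "\<beta> \<in> U0" using b unfolding U0_def underS_def by blast
      then show ?thesis using K'sub[of \<beta>] KpK[of \<beta>] unfolding KKa U0_def by blast
    qed simp
  qed
  have c5: "\<forall>S. clopenin X (HH \<alpha> S) \<and> HH \<alpha> S \<subseteq> KK \<alpha>"
    unfolding HHa KKa using clopen_Un[OF ec Nc] ec eK by (auto simp: clopenin_def)
  have c6: "\<forall>S. HH \<alpha> (-S) = KK \<alpha> - HH \<alpha> S"
  proof
    fix S show "HH \<alpha> (-S) = KK \<alpha> - HH \<alpha> S"
      unfolding HHa KKa eC using eK[of S] K'N by (cases "\<alpha> \<in> S") auto
  qed
  have c7: "\<forall>S. HH \<alpha> S = HH \<alpha> (S \<inter> under r \<alpha>)"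
  proof
    fix S
    have "S \<inter> under r \<alpha> \<inter> U0 = S \<inter> U0" using U0u by blast
    then have "e (S \<inter> under r \<alpha>) = e S" using eI[of S] eI[of "S \<inter> under r \<alpha>"] by simp
    then show "HH \<alpha> S = HH \<alpha> (S \<inter> under r \<alpha>)" unfolding HHa using aU by simp
  qed
  have c8: "\<forall>S \<beta>. (\<beta>,\<alpha>) \<in> r \<longrightarrow> HH \<alpha> S \<inter> KK \<beta> = HH \<beta> S"
  proof (intro allI impI)
    fix S \<beta> assume b: "(\<beta>,\<alpha>) \<in> r"
    show "HH \<alpha> S \<inter> KK \<beta> = HH \<beta> S"
    proof (cases "\<beta> = \<alpha>")
      case True then show ?thesis using c5 by blast
    next
      case False then have bU: "\<beta> \<in> U0" using b unfolding U0_def underS_def by blast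
      have "HH \<alpha> S \<inter> KK \<beta> = e S \<inter> KK \<beta>" unfolding HHa using NK[OF bU] by auto
      also have "\<dots> = e S \<inter> Y \<inter> KK \<beta>" using bU KpK[of \<beta>] unfolding Y_def U0_def by blast
      also have "\<dots> = hh r \<alpha> Hp S \<inter> Kp \<beta>" unfolding eY using KpK[of \<beta>] bU U0_def by simp
      also have "\<dots> = HH \<beta> S" using hK[OF bU] HpH[of \<beta>] bU U0_def by simp
      finally show ?thesis .
    qed
  qed
  have eN: "\<And>S. e S \<inter> N = {}" using eK K'N by blast
  have bempty: "({},{}) \<in> Bs r \<alpha> Kp" unfolding Bs_def by blast
  have c9: "\<forall>S T. S \<inter> T \<inter> under r \<alpha> = {} \<longrightarrow> HH \<alpha> S \<inter> HH \<alpha> T = {}"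
  proof (intro allI impI)
    fix S T' assume st: "S \<inter> T' \<inter> under r \<alpha> = {}"
    then have "S \<inter> T' \<inter> U0 \<subseteq> {}" using U0u by blast
    then have "e S \<inter> e T' \<subseteq> {}" using eD[OF bempty] by blast
    moreover have "\<not> (\<alpha> \<in> S \<and> \<alpha> \<in> T')" using st aU by blast
    ultimately show "HH \<alpha> S \<inter> HH \<alpha> T' = {}" unfolding HHa using eN by auto
  qed
  have c10: "\<forall>S T \<gamma>. \<gamma> \<in> underS r \<alpha> \<longrightarrow> S \<inter> T \<inter> under r \<alpha> \<subseteq> underS r \<gamma> \<longrightarrow> HH \<alpha> S \<inter> HH \<alpha> T \<subseteq> KK \<gamma>"
  proof (intro allI impI)
    fix S T' \<gamma> assume g: "\<gamma> \<in> underS r \<alpha>" and st: "S \<inter> T' \<inter> under r \<alpha> \<subseteq> underS r \<gamma>"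
    have bg: "(underS r \<gamma>, Kp \<gamma>) \<in> Bs r \<alpha> Kp" unfolding Bs_def using g by blast
    have "S \<inter> T' \<inter> U0 \<subseteq> underS r \<gamma>" using st U0u by blast
    then have "e S \<inter> e T' \<subseteq> KK \<gamma>" using eD[OF bg] KpK[OF g] by simp
    moreover have "\<alpha> \<notin> underS r \<gamma>" using g antisym unfolding underS_def by blast
    then have "\<not> (\<alpha> \<in> S \<and> \<alpha> \<in> T')" using st aU by blast
    ultimately show "HH \<alpha> S \<inter> HH \<alpha> T' \<subseteq> KK \<gamma>" unfolding HHa using eN by auto
  qed
  have c11: "HH \<alpha> {\<alpha>} \<noteq> {}" unfolding HHa using Nne by simp
  show "OK \<alpha>" unfolding OK_def using c1 c2 c3 c4 c5 c6 c7 c8 c9 c10 c11 by blast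
qed

lemma OK_all: "OK \<alpha>"
  using wf
proof (induction \<alpha> rule: wf_induct_rule)
  case (less x)
  show ?case by (rule step) (use less in \<open>auto simp: underS_iff\<close>)
qed


lemma lev_mono: "(\<beta>,\<alpha>) \<in> r \<Longrightarrow> HH \<beta> S \<subseteq> HH \<alpha> S"
  using OK_coh[OF OK_all[of \<alpha>]] by blast

lemma H_mono: "S \<subseteq> S' \<Longrightarrow> HH \<alpha> S \<subseteq> HH \<alpha> S'"
proof -
  assume "S \<subseteq> S'"
  then have "S \<inter> (-S') \<inter> under r \<alpha> = {}" by blast
  then have "HH \<alpha> S \<inter> HH \<alpha> (-S') = {}" by (rule OK_disj[OF OK_all])
  then show ?thesis using OK_comp[OF OK_all[of \<alpha>], of S'] OK_HK[OF OK_all[of \<alpha>], of S] by blast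
qed

lemma H_empty: "HH \<alpha> {} = {}"
  using OK_disj[OF OK_all[of \<alpha>], of "{}" "{}"] by simp

lemma max2: "\<exists>m. (\<alpha>,m) \<in> r \<and> (\<gamma>,m) \<in> r"
  using total refl by blast

lemma both_at: "x \<in> HH \<alpha> S \<Longrightarrow> x \<in> HH \<gamma> S' \<Longrightarrow> \<exists>m. x \<in> HH m S \<and> x \<in> HH m S'"
proof -
  assume a: "x \<in> HH \<alpha> S" "x \<in> HH \<gamma> S'"
  obtain m where "(\<alpha>,m) \<in> r" "(\<gamma>,m) \<in> r" using max2 by blast
  then show ?thesis using a lev_mono by blast
qed

lemma K_sub: "KK \<alpha> \<subseteq> T - {p}" using clopen_sub[OF OK_Kc[OF OK_all]] OK_pK[OF OK_all] by blast

lemma K_cover: "T - {p} \<subseteq> (\<Union>\<alpha>. KK \<alpha>)" using Vcov OK_V[OF OK_all] by blast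

definition AA :: "('k \<Rightarrow> bool) \<Rightarrow> 'a set" where "AA f = (\<Union>\<alpha>. HH \<alpha> {\<beta>. f \<beta>})"

lemma AA_sub: "AA f \<subseteq> T - {p}" unfolding AA_def using OK_HK[OF OK_all] K_sub by blast

lemma AA_open: "openin X (AA f)" unfolding AA_def
  using OK_Hc[OF OK_all] by (auto simp: clopenin_def intro!: openin_Union)

lemma AA_cover: "T - {p} \<subseteq> AA f \<union> AA (\<lambda>\<beta>. \<not> f \<beta>)"
proof
  fix x assume "x \<in> T - {p}"
  then obtain \<alpha> where x: "x \<in> KK \<alpha>" using K_cover by blast
  have "{\<beta>. \<not> f \<beta>} = - {\<beta>. f \<beta>}" by blast
  then have "x \<in> HH \<alpha> {\<beta>. f \<beta>} \<or> x \<in> HH \<alpha> {\<beta>. \<not> f \<beta>}" using OK_comp[OF OK_all[of \<alpha>], of "{\<beta>. f \<beta>}"] x by auto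
  then show "x \<in> AA f \<union> AA (\<lambda>\<beta>. \<not> f \<beta>)" unfolding AA_def by blast
qed

lemma AA_disj: "AA (\<lambda>\<beta>. \<not> f \<beta>) \<inter> AA f = {}"
proof (rule ccontr)
  assume "AA (\<lambda>\<beta>. \<not> f \<beta>) \<inter> AA f \<noteq> {}"
  then obtain x \<alpha> \<gamma> where "x \<in> HH \<alpha> {\<beta>. \<not> f \<beta>}" "x \<in> HH \<gamma> {\<beta>. f \<beta>}" unfolding AA_def by blast
  then obtain m where m: "x \<in> HH m {\<beta>. \<not> f \<beta>}" "x \<in> HH m {\<beta>. f \<beta>}" using both_at by blast
  have "{\<beta>. \<not> f \<beta>} \<inter> {\<beta>. f \<beta>} \<inter> under r m = {}" by blast
  then show False using OK_disj[OF OK_all] m by blast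
qed

lemma fin_bound: "finite F \<Longrightarrow> F \<subseteq> range KK \<Longrightarrow> \<exists>\<delta>. \<Union>F \<subseteq> KK \<delta>"
proof (induction F rule: finite_induct)
  case empty
  have "\<Union>{} \<subseteq> KK undefined" by (rule subsetI) (erule UnionE, erule emptyE)
  then show ?case by (rule exI)
next
  case (insert K F)
  have Fs: "F \<subseteq> range KK" using insert.prems by (rule subset_trans[OF subset_insertI])
  obtain \<delta> where d: "\<Union>F \<subseteq> KK \<delta>" using insert.IH[OF Fs] by (elim exE)
  have "K \<in> range KK" using insert.prems by (rule subsetD) (rule insertI1)
  then obtain \<alpha> where a: "K = KK \<alpha>" by (elim rangeE)
  obtain m where "(\<alpha>,m) \<in> r" "(\<delta>,m) \<in> r" using max2 by blast
  then have "KK \<alpha> \<subseteq> KK m" "KK \<delta> \<subseteq> KK m" using OK_Kmono[OF OK_all] by blast+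
  then show ?case using a d by blast
qed

theorem final:
  "\<exists>A :: ('k \<Rightarrow> bool) \<Rightarrow> 'a set.
    (\<forall>f. clopenin (subtopology X (topspace X - {p})) (A f)) \<and>
    (\<forall>f. (\<exists>\<alpha>. f \<alpha>) \<longrightarrow> A f \<noteq> {}) \<and>
    (\<forall>f. (\<forall>\<alpha>. \<exists>\<beta>. (\<alpha>, \<beta>) \<in> r \<and> \<alpha> \<noteq> \<beta> \<and> f \<beta>) \<longrightarrow>
         \<not> compactin (subtopology X (topspace X - {p})) (A f)) \<and>
    (\<forall>f. A (\<lambda>\<alpha>. \<not> f \<alpha>) \<inter> A f = {}) \<and>
    (\<forall>f g. (\<forall>\<alpha>. f \<alpha> \<longrightarrow> g \<alpha>) \<longrightarrow> A f \<subseteq> A g) \<and>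
    (\<forall>f g. (\<exists>\<delta>. \<forall>\<beta>. (\<delta>, \<beta>) \<in> r \<longrightarrow> f \<beta> = g \<beta>) \<longrightarrow>
         (\<exists>U. clopenin X U \<and> p \<in> U \<and> A f \<inter> U = A g \<inter> U))"
proof (intro exI[of _ AA] conjI allI impI)
  fix f :: "'k \<Rightarrow> bool"
  show "clopenin (subtopology X (topspace X - {p})) (AA f)"
  proof -
    have o: "openin (subtopology X (T - {p})) (AA f)"
      using openin_subtopology_Int[OF AA_open[of f], of "T - {p}"] AA_sub[of f] by (simp add: Int_absorb2)
    have e: "T \<inter> (T - {p}) - AA f = AA (\<lambda>\<beta>. \<not> f \<beta>)"
      using AA_cover[of f] AA_disj[of f] AA_sub[of "\<lambda>\<beta>. \<not> f \<beta>"] by blast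
    have "openin (subtopology X (T - {p})) (AA (\<lambda>\<beta>. \<not> f \<beta>))"
      using openin_subtopology_Int[OF AA_open[of "\<lambda>\<beta>. \<not> f \<beta>"], of "T - {p}"] AA_sub[of "\<lambda>\<beta>. \<not> f \<beta>"]
      by (simp add: Int_absorb2)
    then have c: "closedin (subtopology X (T - {p})) (AA f)"
      unfolding closedin_def using e AA_sub[of f] by auto
    show ?thesis using o c unfolding clopenin_def by blast
  qed
next
  fix f :: "'k \<Rightarrow> bool" assume "\<exists>\<alpha>. f \<alpha>"
  then obtain \<alpha> where a: "f \<alpha>" by blast
  have "HH \<alpha> {\<alpha>} \<subseteq> HH \<alpha> {\<beta>. f \<beta>}" using a by (intro H_mono) auto
  then show "AA f \<noteq> {}" using OK_ne[OF OK_all[of \<alpha>]] unfolding AA_def by blast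
next
  fix f :: "'k \<Rightarrow> bool" assume unb: "\<forall>\<alpha>. \<exists>\<beta>. (\<alpha>, \<beta>) \<in> r \<and> \<alpha> \<noteq> \<beta> \<and> f \<beta>"
  show "\<not> compactin (subtopology X (topspace X - {p})) (AA f)"
  proof
    assume "compactin (subtopology X (topspace X - {p})) (AA f)"
    then have cp: "compactin X (AA f)" by (simp add: compactin_subtopology)
    have "\<forall>U\<in>range KK. openin X U" using OK_Kc[OF OK_all] by (auto simp: clopenin_def)
    moreover have "AA f \<subseteq> \<Union>(range KK)" using AA_sub K_cover by blast
    ultimately obtain F where F: "finite F" "F \<subseteq> range KK" "AA f \<subseteq> \<Union>F"
      using cp unfolding compactin_def by meson
    obtain \<delta> where d0: "\<Union>F \<subseteq> KK \<delta>" using fin_bound[OF F(1,2)] by (elim exE)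
    have d: "AA f \<subseteq> KK \<delta>" using F(3) d0 by (rule subset_trans)
    obtain \<beta> where b: "(\<delta>,\<beta>) \<in> r" "\<delta> \<noteq> \<beta>" "f \<beta>" using unb by blast
    have "HH \<beta> {\<beta>} \<subseteq> AA f" unfolding AA_def using H_mono[of "{\<beta>}" "{\<beta>. f \<beta>}" \<beta>] b(3) by blast
    then have "HH \<beta> {\<beta>} = HH \<beta> {\<beta>} \<inter> KK \<delta>" using d by blast
    also have "\<dots> = HH \<delta> {\<beta>}" using OK_coh[OF OK_all b(1)] by simp
    also have "\<dots> = HH \<delta> ({\<beta>} \<inter> under r \<delta>)" by (rule OK_under[OF OK_all])
    also have "{\<beta>} \<inter> under r \<delta> = {}" using b antisym under_iff by blast
    finally have "HH \<beta> {\<beta>} = {}" using H_empty by simp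
    then show False using OK_ne[OF OK_all] by blast
  qed
next
  fix f :: "'k \<Rightarrow> bool" show "AA (\<lambda>\<alpha>. \<not> f \<alpha>) \<inter> AA f = {}" by (rule AA_disj)
next
  fix f g :: "'k \<Rightarrow> bool" assume fg: "\<forall>\<alpha>. f \<alpha> \<longrightarrow> g \<alpha>"
  show "AA f \<subseteq> AA g" unfolding AA_def using H_mono[of "{\<beta>. f \<beta>}" "{\<beta>. g \<beta>}"] fg by blast
next
  fix f g :: "'k \<Rightarrow> bool" assume "\<exists>\<delta>. \<forall>\<beta>. (\<delta>, \<beta>) \<in> r \<longrightarrow> f \<beta> = g \<beta>"
  then obtain \<delta> where d: "\<And>\<beta>. (\<delta>, \<beta>) \<in> r \<Longrightarrow> f \<beta> = g \<beta>" by blast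
  have half: "AA f' \<inter> (T - KK \<delta>) \<subseteq> AA g'"
    if d': "\<And>\<beta>. (\<delta>, \<beta>) \<in> r \<Longrightarrow> f' \<beta> = g' \<beta>" for f' g'
  proof
    fix x assume x: "x \<in> AA f' \<inter> (T - KK \<delta>)"
    have "x \<in> AA g' \<union> AA (\<lambda>\<beta>. \<not> g' \<beta>)" using x AA_sub AA_cover by blast
    moreover have "x \<notin> AA (\<lambda>\<beta>. \<not> g' \<beta>)"
    proof
      assume "x \<in> AA (\<lambda>\<beta>. \<not> g' \<beta>)"
      then obtain \<alpha> \<gamma> where "x \<in> HH \<alpha> {\<beta>. f' \<beta>}" "x \<in> HH \<gamma> {\<beta>. \<not> g' \<beta>}" using x unfolding AA_def by blast
      then obtain m where m: "x \<in> HH m {\<beta>. f' \<beta>}" "x \<in> HH m {\<beta>. \<not> g' \<beta>}" using both_at by blast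
      have sub: "{\<beta>. f' \<beta>} \<inter> {\<beta>. \<not> g' \<beta>} \<inter> under r m \<subseteq> underS r \<delta>"
        using d' not_le_imp by blast
      show False
      proof (cases "\<delta> \<in> underS r m")
        case True
        then show False using OK_bdisj[OF OK_all True sub] m x by blast
      next
        case False
        then have "(m,\<delta>) \<in> r" using not_le_imp by blast
        then show False using OK_Kmono[OF OK_all] OK_HK[OF OK_all] m x by blast
      qed
    qed
    ultimately show "x \<in> AA g'" by blast
  qed
  have "clopenin X (T - KK \<delta>)" by (rule clopen_diff[OF clopen_T OK_Kc[OF OK_all]])
  moreover have "p \<in> T - KK \<delta>" using pT OK_pK[OF OK_all] by blast
  moreover have "AA f \<inter> (T - KK \<delta>) = AA g \<inter> (T - KK \<delta>)"
    using half[of f g] half[of g f] d by force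
  ultimately show "\<exists>U. clopenin X U \<and> p \<in> U \<and> AA f \<inter> U = AA g \<inter> U" by blast
qed

end




lemma csep:
  assumes cmp: "compact_space X"
    and cb: "\<And>U x. openin X U \<Longrightarrow> x \<in> U \<Longrightarrow> \<exists>C. clopenin X C \<and> x \<in> C \<and> C \<subseteq> U"
    and A: "closedin X A" and B: "closedin X B" and AB: "A \<inter> B = {}"
  shows "\<exists>C. clopenin X C \<and> A \<subseteq> C \<and> C \<inter> B = {}"
proof -
  define \<U> where "\<U> = {C. clopenin X C \<and> C \<inter> B = {}}"
  have cA: "compactin X A" using closedin_compact_space[OF cmp A] .
  have "\<forall>U\<in>\<U>. openin X U" unfolding \<U>_def clopenin_def by blast
  moreover have "A \<subseteq> \<Union>\<U>"
  proof
    fix a assume a: "a \<in> A"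
    have "openin X (topspace X - B)" using B unfolding closedin_def by blast
    moreover have "a \<in> topspace X - B" using a AB closedin_subset[OF A] by blast
    ultimately obtain C where "clopenin X C" "a \<in> C" "C \<subseteq> topspace X - B" using cb by blast
    then show "a \<in> \<Union>\<U>" unfolding \<U>_def by blast
  qed
  ultimately obtain F where F: "finite F" "F \<subseteq> \<U>" "A \<subseteq> \<Union>F"
    using cA unfolding compactin_def by meson
  have "clopenin X (\<Union>F)" unfolding clopenin_def
  proof
    show "openin X (\<Union>F)" using F(2) unfolding \<U>_def clopenin_def by (intro openin_Union) blast
    show "closedin X (\<Union>F)" using F(1,2) unfolding \<U>_def clopenin_def by (intro closedin_Union) blast+
  qed
  moreover have "\<Union>F \<inter> B = {}" using F(2) unfolding \<U>_def by blast
  ultimately show ?thesis using F(3) by blast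
qed

theorem lemma7p3:
  fixes r :: "'k rel" and X :: "'a topology" and p :: 'a
  assumes kappa: "card_order r" "infinite (UNIV :: 'k set)"
    and kk: "kappa_eq_kappa_lt_kappa r"
    and S: "kappa_Parovicenko (UNIV :: 'k set) X" "weight_eq X (UNIV :: 'k set)"
    and pt: "P_kappa_point (UNIV :: 'k set) X p"
  shows "\<exists>A :: ('k \<Rightarrow> bool) \<Rightarrow> 'a set.
    (\<forall>f. clopenin (subtopology X (topspace X - {p})) (A f)) \<and>
    (\<forall>f. (\<exists>\<alpha>. f \<alpha>) \<longrightarrow> A f \<noteq> {}) \<and>
    (\<forall>f. (\<forall>\<alpha>. \<exists>\<beta>. (\<alpha>, \<beta>) \<in> r \<and> \<alpha> \<noteq> \<beta> \<and> f \<beta>) \<longrightarrow>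
         \<not> compactin (subtopology X (topspace X - {p})) (A f)) \<and>
    (\<forall>f. A (\<lambda>\<alpha>. \<not> f \<alpha>) \<inter> A f = {}) \<and>
    (\<forall>f g. (\<forall>\<alpha>. f \<alpha> \<longrightarrow> g \<alpha>) \<longrightarrow> A f \<subseteq> A g) \<and>
    (\<forall>f g. (\<exists>\<delta>. \<forall>\<beta>. (\<delta>, \<beta>) \<in> r \<longrightarrow> f \<beta> = g \<beta>) \<longrightarrow>
         (\<exists>U. clopenin X U \<and> p \<in> U \<and> A f \<inter> U = A g \<inter> U))"
proof -
  have cmp: "compact_space X" and hd: "Hausdorff_space X" and zd: "zero_dimensional X"
    and Fk: "F_kappa_space (UNIV::'k set) X" and noiso0: "\<forall>x\<in>topspace X. \<not> openin X {x}"
    using S(1) unfolding kappa_Parovicenko_def by auto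
  have pT: "p \<in> topspace X" using pt unfolding P_kappa_point_def by blast
  obtain Bz where Bz: "is_base X Bz" "\<forall>V\<in>Bz. clopenin X V" using zd unfolding zero_dimensional_def by blast
  have cb: "\<And>U x. openin X U \<Longrightarrow> x \<in> U \<Longrightarrow> \<exists>C. clopenin X C \<and> x \<in> C \<and> C \<subseteq> U"
  proof -
    fix U x assume U: "openin X U" and x: "x \<in> U"
    obtain F where "F \<subseteq> Bz" "\<Union>F = U" using Bz(1) U unfolding is_base_def by blast
    then show "\<exists>C. clopenin X C \<and> x \<in> C \<and> C \<subseteq> U" using x Bz(2) by blast
  qed
  have t1: "t1_space X" by (rule Hausdorff_imp_t1_space[OF hd])
  have closedp: "closedin X {p}"
    using t1 pT unfolding t1_space_closedin_singleton by blast
  have noiso: "\<And>U. openin X U \<Longrightarrow> p \<in> U \<Longrightarrow> \<exists>q\<in>U. q \<noteq> p"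
  proof (rule ccontr)
    fix U assume U: "openin X U" "p \<in> U" "\<not> (\<exists>q\<in>U. q \<noteq> p)"
    then have "U = {p}" by blast
    then show False using U noiso0 pT by blast
  qed
  have sep: "\<And>\<F> P Q. (\<forall>C\<in>\<F>. clopenin X C) \<Longrightarrow> card_lt \<F> (UNIV::'k set) \<Longrightarrow> openin X P \<Longrightarrow> openin X Q
      \<Longrightarrow> P \<inter> Q = {} \<Longrightarrow> P \<union> Q = \<Union>\<F> \<Longrightarrow> \<exists>C. clopenin X C \<and> P \<subseteq> C \<and> C \<inter> Q = {}"
  proof -
    fix \<F> P Q assume F: "\<forall>C\<in>\<F>. clopenin X C" "card_lt \<F> (UNIV::'k set)" and P: "openin X P"
      and Q: "openin X Q" and PQ: "P \<inter> Q = {}" "P \<union> Q = \<Union>\<F>"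
    have oU: "openin X (P \<union> Q)" using P Q by blast
    have "type_less X (UNIV::'k set) (P \<union> Q)" unfolding type_less_def using F PQ(2) by blast
    then have cs: "C_star_embedded X (P \<union> Q)" using Fk oU unfolding F_kappa_space_def by blast
    define f0 where "f0 = (\<lambda>x. if x \<in> P then (1::real) else 0)"
    have PT: "P \<subseteq> topspace X" "Q \<subseteq> topspace X" using P Q openin_subset by blast+
    have cont: "continuous_map (subtopology X (P \<union> Q)) euclideanreal f0"
      unfolding continuous_map_def
    proof (intro conjI allI impI)
      show "f0 \<in> topspace (subtopology X (P \<union> Q)) \<rightarrow> topspace euclideanreal" by simp
    next
      fix U :: "real set" assume "openin euclideanreal U"
      have eq: "{x \<in> topspace (subtopology X (P \<union> Q)). f0 x \<in> U}
          = ((if 1 \<in> U then P else {}) \<union> (if 0 \<in> U then Q else {})) \<inter> (P \<union> Q)"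
        using PT PQ(1) unfolding f0_def by auto
      have "openin X ((if 1 \<in> U then P else {}) \<union> (if 0 \<in> U then Q else {}))" using P Q by auto
      then show "openin (subtopology X (P \<union> Q)) {x \<in> topspace (subtopology X (P \<union> Q)). f0 x \<in> U}"
        unfolding eq by (rule openin_subtopology_Int)
    qed
    have "f0 ` (P \<union> Q) \<subseteq> {0,1}" unfolding f0_def by auto
    then have bd: "bounded (f0 ` (P \<union> Q))" using finite_imp_bounded finite_subset by blast
    obtain g where g: "continuous_map X euclideanreal g" "\<And>x. x \<in> P \<union> Q \<Longrightarrow> g x = f0 x"
      using cs cont bd unfolding C_star_embedded_def by blast
    define A0 where "A0 = {x \<in> topspace X. g x \<in> {1}}"
    define B0 where "B0 = {x \<in> topspace X. g x \<in> {0}}"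
    have cA: "closedin X A0" unfolding A0_def
      by (rule closedin_continuous_map_preimage[OF g(1)]) (simp add: closed_closedin[symmetric])
    have cB: "closedin X B0" unfolding B0_def
      by (rule closedin_continuous_map_preimage[OF g(1)]) (simp add: closed_closedin[symmetric])
    have AB: "A0 \<inter> B0 = {}" unfolding A0_def B0_def by auto
    obtain C where C: "clopenin X C" "A0 \<subseteq> C" "C \<inter> B0 = {}" using csep[OF cmp cb cA cB AB] by blast
    have "P \<subseteq> A0" unfolding A0_def using PT g(2) unfolding f0_def by auto
    moreover have "Q \<subseteq> B0" unfolding B0_def using PT g(2) PQ(1) unfolding f0_def by auto
    ultimately show "\<exists>C. clopenin X C \<and> P \<subseteq> C \<and> C \<inter> Q = {}" using C by blast
  qed
  have pk: "\<And>\<N>. (\<forall>N\<in>\<N>. clopenin X N \<and> p \<in> N) \<Longrightarrow> card_lt \<N> (UNIV::'k set) \<Longrightarrow>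
      \<exists>W. clopenin X W \<and> p \<in> W \<and> W \<subseteq> \<Inter>\<N>"
  proof -
    fix \<N> assume N: "\<forall>N\<in>\<N>. clopenin X N \<and> p \<in> N" "card_lt \<N> (UNIV::'k set)"
    have "\<forall>M\<in>\<N>. neighbourhood X p M" unfolding neighbourhood_def using N(1) clopenin_def by blast
    then obtain V0 where V0: "openin X V0" "p \<in> V0" "V0 \<subseteq> \<Inter>\<N>" using pt N(2) unfolding P_kappa_point_def by blast
    then obtain C where "clopenin X C" "p \<in> C" "C \<subseteq> V0" using cb by blast
    then show "\<exists>W. clopenin X W \<and> p \<in> W \<and> W \<subseteq> \<Inter>\<N>" using V0 by blast
  qed
  obtain Bw where Bw: "is_base X Bw" "card_le Bw (UNIV::'k set)" using S(2) unfolding weight_eq_def by blast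
  have "\<exists>f. inj_on f Bw \<and> f ` Bw \<subseteq> (UNIV::'k set)"
    using Bw(2) unfolding card_le_def card_of_ordLeq[symmetric] .
  then obtain \<iota> :: "'a set \<Rightarrow> 'k" where inj: "inj_on \<iota> Bw" by (elim exE conjE)
  define Vsel where "Vsel = (\<lambda>b. if \<exists>C. clopenin X C \<and> b \<subseteq> C \<and> p \<notin> C then SOME C. clopenin X C \<and> b \<subseteq> C \<and> p \<notin> C else {})"
  define Vf where "Vf = (\<lambda>\<alpha>. if \<alpha> \<in> \<iota> ` Bw then Vsel (inv_into Bw \<iota> \<alpha>) else {})"
  have Vsel1: "clopenin X (Vsel b) \<and> p \<notin> Vsel b" for b
  proof (cases "\<exists>C. clopenin X C \<and> b \<subseteq> C \<and> p \<notin> C")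
    case True
    have "Vsel b = (SOME C. clopenin X C \<and> b \<subseteq> C \<and> p \<notin> C)" unfolding Vsel_def using True by (rule if_P)
    then show ?thesis using someI_ex[OF True] by simp
  next
    case False
    have "Vsel b = {}" unfolding Vsel_def using False by (rule if_not_P)
    then show ?thesis by (simp add: clopenin_def)
  qed
  have Vclo: "\<And>\<alpha>. clopenin X (Vf \<alpha>)" unfolding Vf_def using Vsel1 by (simp add: clopenin_def)
  have Vp: "\<And>\<alpha>. p \<notin> Vf \<alpha>" unfolding Vf_def using Vsel1 by simp
  have Vcov: "topspace X - {p} \<subseteq> (\<Union>\<alpha>. Vf \<alpha>)"
  proof
    fix x assume x: "x \<in> topspace X - {p}"
    have "openin X (topspace X - {p})" using closedp unfolding closedin_def by blast
    then obtain C where C: "clopenin X C" "x \<in> C" "C \<subseteq> topspace X - {p}" using cb x by blast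
    then obtain F where "F \<subseteq> Bw" "\<Union>F = C" using Bw(1) unfolding is_base_def clopenin_def by blast
    then obtain b where b: "b \<in> Bw" "x \<in> b" "b \<subseteq> C" using C(2) by blast
    then have ex: "\<exists>C. clopenin X C \<and> b \<subseteq> C \<and> p \<notin> C" using C by blast
    have "Vsel b = (SOME C. clopenin X C \<and> b \<subseteq> C \<and> p \<notin> C)" unfolding Vsel_def using ex by (rule if_P)
    then have "b \<subseteq> Vsel b" using someI_ex[OF ex] by simp
    moreover have "Vf (\<iota> b) = Vsel b" unfolding Vf_def using b(1) inv_into_f_f[OF inj b(1)] by simp
    ultimately show "x \<in> (\<Union>\<alpha>. Vf \<alpha>)" using b(2) by blast
  qed
  have "|UNIV::'k set| =o |kappa_lt_kappa_funs r|"
    using kk unfolding kappa_eq_kappa_lt_kappa_def by (rule ordIso_symmetric)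
  then have "\<exists>f. bij_betw f (UNIV::'k set) (kappa_lt_kappa_funs r)" unfolding card_of_ordIso[symmetric] .
  then obtain gg where gg: "bij_betw gg (UNIV::'k set) (kappa_lt_kappa_funs r)" by (elim exE)
  define c1 :: 'k where "c1 = undefined"
  have "\<exists>c. c \<noteq> c1"
  proof (rule ccontr)
    assume "\<not> (\<exists>c. c \<noteq> c1)"
    then have "(UNIV::'k set) = {c1}" by blast
    then have "finite (UNIV::'k set)" by (metis finite.emptyI finite_insert)
    then show False using kappa(2) by blast
  qed
  then obtain c0 where c0: "c0 \<noteq> c1" by blast
  define Enf where "Enf = (\<lambda>(\<alpha>::'k) \<xi>. {\<beta>. snd (gg \<xi>) \<beta> = c1})"
  have En: "\<And>\<alpha> S. S \<subseteq> underS r \<alpha> \<Longrightarrow> \<exists>\<xi>. Enf \<alpha> \<xi> \<inter> underS r \<alpha> = S"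
  proof -
    fix \<alpha> S assume S: "S \<subseteq> underS r \<alpha>"
    define hS where "hS = (\<lambda>\<beta>. if \<beta> \<in> underS r \<alpha> then (if \<beta> \<in> S then c1 else c0) else undefined)"
    have "hS \<in> underS r \<alpha> \<rightarrow>\<^sub>E (UNIV::'k set)" unfolding hS_def by auto
    then have "(\<alpha>, hS) \<in> kappa_lt_kappa_funs r" unfolding kappa_lt_kappa_funs_def by blast
    then have "(\<alpha>, hS) \<in> range gg" using gg unfolding bij_betw_def by simp
    then obtain \<xi> where "gg \<xi> = (\<alpha>, hS)" by (metis rangeE)
    then have "Enf \<alpha> \<xi> \<inter> underS r \<alpha> = S" unfolding Enf_def hS_def using S c0 by auto
    then show "\<exists>\<xi>. Enf \<alpha> \<xi> \<inter> underS r \<alpha> = S" by blast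
  qed
  interpret cs: constr r X p Vf Enf
  proof (unfold_locales)
    show "card_order r" by (rule kappa(1))
    show "infinite (UNIV::'k set)" by (rule kappa(2))
    show "p \<in> topspace X" by (rule pT)
    show "\<And>U x. openin X U \<Longrightarrow> x \<in> U \<Longrightarrow> \<exists>C. clopenin X C \<and> x \<in> C \<and> C \<subseteq> U" by (rule cb)
    show "\<And>U. openin X U \<Longrightarrow> p \<in> U \<Longrightarrow> \<exists>q\<in>U. q \<noteq> p" by (rule noiso)
    show "closedin X {p}" by (rule closedp)
    show "\<And>\<F> P Q. (\<forall>C\<in>\<F>. clopenin X C) \<Longrightarrow> card_lt \<F> (UNIV::'k set) \<Longrightarrow> openin X P \<Longrightarrow> openin X Q
      \<Longrightarrow> P \<inter> Q = {} \<Longrightarrow> P \<union> Q = \<Union>\<F> \<Longrightarrow> \<exists>C. clopenin X C \<and> P \<subseteq> C \<and> C \<inter> Q = {}" by (rule sep)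
    show "\<And>\<N>. (\<forall>N\<in>\<N>. clopenin X N \<and> p \<in> N) \<Longrightarrow> card_lt \<N> (UNIV::'k set) \<Longrightarrow>
      \<exists>W. clopenin X W \<and> p \<in> W \<and> W \<subseteq> \<Inter>\<N>" by (rule pk)
    show "\<And>\<alpha>. clopenin X (Vf \<alpha>)" by (rule Vclo)
    show "\<And>\<alpha>. p \<notin> Vf \<alpha>" by (rule Vp)
    show "topspace X - {p} \<subseteq> (\<Union>\<alpha>. Vf \<alpha>)" by (rule Vcov)
    show "\<And>\<alpha> S. S \<subseteq> underS r \<alpha> \<Longrightarrow> \<exists>\<xi>. Enf \<alpha> \<xi> \<inter> underS r \<alpha> = S" by (rule En)
  qed
  show ?thesis by (rule cs.final)
qed


end
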